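(* Let $g\in K\{\{x\}\}$ with $\mathrm{ord}_x(g)\ge1$ and $g'=1+g$, where $g'=\frac{d}{dx}g$ and $1=1_P$. Then for every $f\in K\{\{x\}\}$, $$\frac{d}{dx}\big(f(g(x))\big)=f'(g(x))+\Big(\big(x\tfrac{d}{dx}\big)(f)\Big)(g(x))=\Big(\big((1+x)\tfrac{d}{dx}\big)(f)\Big)(g(x)).$$
   Context: Let $K$ be a field and let $x\neq y$ be two symbols. A finite planar reduced rooted tree is a finite rooted tree in which the children of each vertex are linearly ordered and no vertex has exactly one child; its leaves are the vertices without children. $P(x,y)$ is the set of isomorphism classes of pairs $S=(T,\lambda)$, $T$ a finite planar reduced rooted tree, $\lambda:L(T)\to\{x,y\}$ a labeling of its leaves; $\deg_x(S)=\#\lambda^{-1}(x)$. $P'(x,y)=P(x,y)\cup\{1_P\}$ with $1_P$ the empty tree. For $m\ge2$, $\bullet_m(S_1,\dots,S_m)$ is the tree with a new root whose ordered children are the roots of $S_1,\dots,S_m$, labelings inherited; on $P'(x,y)$ occurrences of $1_P$ are deleted, with $\bullet_1(S)=S$, $\bullet_0()=1_P$. $K\{\{x,y\}$: all $f=\sum_{S\in P'(x,y)}c_S(f)S$ such that for each $n$ only finitely many $S$ with $\deg_x(S)=n$ have $c_S(f)\ne0$; products $f_1\cdot\ldots\cdot f_m=\bullet_m(f_1,\dots,f_m)$ with $c_S(f_1\cdot\ldots\cdot f_m)=\sum_{\bullet_m(S_1,\dots,S_m)=S}c_{S_1}(f_1)\cdots c_{S_m}(f_m)$; $x$-adic topology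 from $\mathrm{ord}_x(f)=\min\{\deg_x S:c_S(f)\ne0\}$. $K\{\{x\}\}$: series supported on $1_P$ and trees with all leaves labeled $x$. For $g,h\in K\{\{x,y\}$ with $\mathrm{ord}_x(g)\ge1$, $\varphi_{(g,h)}$ denotes the unique $x$-adically continuous $K$-linear map preserving $1_P$ and all $\bullet_m$ with $x\mapsto g$, $y\mapsto h$; for $f\in K\{\{x\}\}$, $f(g(x))$ denotes $\varphi_{(g,h)}(f)$ (independent of $h$). The universal derivation $d:K\{\{x\}\}\to K\{\{x,y\}$ is the continuous $K$-linear map with $d(1_P)=0$ and, for a tree $S=(T,\lambda)$ with all leaves $l_1,\dots,l_m$ labeled $x$, $d(S)=\sum_{i=1}^m(T,\lambda^{(i)})$ with $\lambda^{(i)}$ labeling $l_i$ by $y$ and the other leaves by $x$. For $h\in K\{\{x\}\}$, the derivation $h\frac{d}{dx}:K\{\{x\}\}\to K\{\{x\}\}$ is defined as $\varphi_{(x,h)}\circ d$ (note $(h\frac{d}{dx})(f)\neq h\cdot\frac{d}{dx}(f)$ in general); in particular $\frac{d}{dx}=\varphi_{(x,1_P)}\circ d$, and $f'=\frac{d}{dx}f$. For instance $(x\frac{d}{dx})(T)=nT$ for a tree $T$ with $n$ leaves. *)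

theory Defs
  imports Main
begin

datatype lbl = LX | LY

datatype ptree = Leaf lbl | Node "ptree list"

text \<open>Reduced: no vertex has exactly one child (and we also exclude childless
  internal nodes, whose only childless vertices are leaves). Together with the
  empty tree (None) these represent P'(x,y).\<close>
fun reduced :: "ptree \<Rightarrow> bool" where
  "reduced (Leaf l) = True"
| "reduced (Node ts) = (2 \<le> length ts \<and> (\<forall>t\<in>set ts. reduced t))"

definition wfP :: "ptree option \<Rightarrow> bool" where
  "wfP S = (case S of None \<Rightarrow> True | Some t \<Rightarrow> reduced t)"

fun leaves :: "ptree \<Rightarrow> lbl list" where
  "leaves (Leaf l) = [l]"
| "leaves (Node ts) = concat (map leaves ts)"

definition degx :: "ptree option \<Rightarrow> nat" where
  "degx S = (case S of None \<Rightarrow> 0 | Some t \<Rightarrow> count_list (leaves t) LX)"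

definition only_x :: "ptree option \<Rightarrow> bool" where
  "only_x S = (case S of None \<Rightarrow> True | Some t \<Rightarrow> LY \<notin> set (leaves t))"

definition bulletP :: "ptree option list \<Rightarrow> ptree option" where
  "bulletP Ss = (let ts = [t. Some t \<leftarrow> Ss] in
     (case ts of [] \<Rightarrow> None | [t] \<Rightarrow> Some t | _ \<Rightarrow> Some (Node ts)))"

type_synonym 'k ser = "ptree option \<Rightarrow> 'k"

definition KXY :: "('k::field) ser set" where
  "KXY = {f. (\<forall>S. \<not> wfP S \<longrightarrow> f S = 0) \<and> (\<forall>n. finite {S. f S \<noteq> 0 \<and> degx S = n})}"

definition KX :: "('k::field) ser set" where
  "KX = {f \<in> KXY. \<forall>S. f S \<noteq> 0 \<longrightarrow> only_x S}"

text \<open>ord_x(f) \<ge> n  (with ord_x(0) = \<infinity>)\<close>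
definition ordx_ge :: "('k::field) ser \<Rightarrow> nat \<Rightarrow> bool" where
  "ordx_ge f n = (\<forall>S. f S \<noteq> 0 \<longrightarrow> n \<le> degx S)"

definition oneP :: "('k::field) ser" where
  "oneP = (\<lambda>S. if S = None then 1 else 0)"

definition xser :: "('k::field) ser" where
  "xser = (\<lambda>S. if S = Some (Leaf LX) then 1 else 0)"

definition ser_add :: "('k::field) ser \<Rightarrow> 'k ser \<Rightarrow> 'k ser" where
  "ser_add f g = (\<lambda>S. f S + g S)"

definition ser_zero :: "('k::field) ser" where
  "ser_zero = (\<lambda>S. 0)"

definition ser_prod :: "('k::field) ser list \<Rightarrow> 'k ser" where
  "ser_prod fs = (\<lambda>S. \<Sum>Ss\<in>{Ss. length Ss = length fs \<and> (\<forall>s\<in>set Ss. wfP s) \<and> bulletP Ss = S}.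
                        \<Prod>i<length fs. (fs ! i) (Ss ! i))"

fun phi_tree :: "('k::field) ser \<Rightarrow> 'k ser \<Rightarrow> ptree \<Rightarrow> 'k ser" where
  "phi_tree g h (Leaf LX) = g"
| "phi_tree g h (Leaf LY) = h"
| "phi_tree g h (Node ts) = ser_prod (map (phi_tree g h) ts)"

definition phi_P :: "('k::field) ser \<Rightarrow> 'k ser \<Rightarrow> ptree option \<Rightarrow> 'k ser" where
  "phi_P g h S = (case S of None \<Rightarrow> oneP | Some t \<Rightarrow> phi_tree g h t)"

text \<open>phi_(g,h)(f) = sum_S c_S(f) phi_(g,h)(S), the x-adically convergent sum
  (for ord_x(g) \<ge> 1 only finitely many terms contribute to each coefficient).\<close>
definition phi :: "('k::field) ser \<Rightarrow> 'k ser \<Rightarrow> 'k ser \<Rightarrow> 'k ser" where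
  "phi g h f = (\<lambda>T. \<Sum>S\<in>{S. f S \<noteq> 0 \<and> phi_P g h S T \<noteq> 0}. f S * phi_P g h S T)"

text \<open>f(g(x)) = phi_(g,h)(f); independent of h for f in K{{x}}; we take h = 0.\<close>
definition subst :: "('k::field) ser \<Rightarrow> 'k ser \<Rightarrow> 'k ser" where
  "subst f g = phi g ser_zero f"

text \<open>Universal derivation on trees: sum over x-labelled leaves of the relabelling
  of that leaf by y (as a list, with multiplicity, in leaf order).\<close>
fun dtree :: "ptree \<Rightarrow> ptree list" and dlist :: "ptree list \<Rightarrow> ptree list list" where
  "dtree (Leaf LX) = [Leaf LY]"
| "dtree (Leaf LY) = []"
| "dtree (Node ts) = map Node (dlist ts)"
| "dlist [] = []"
| "dlist (t # ts) = map (\<lambda>t'. t' # ts) (dtree t) @ map (\<lambda>ts'. t # ts') (dlist ts)"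

definition dP :: "ptree option \<Rightarrow> ptree option list" where
  "dP S = (case S of None \<Rightarrow> [] | Some t \<Rightarrow> map Some (dtree t))"

definition dser :: "('k::field) ser \<Rightarrow> 'k ser" where
  "dser f = (\<lambda>T. \<Sum>S\<in>{S. f S \<noteq> 0 \<and> T \<in> set (dP S)}. f S * of_nat (count_list (dP S) T))"

definition hder :: "('k::field) ser \<Rightarrow> 'k ser \<Rightarrow> 'k ser" where
  "hder h f = phi xser h (dser f)"

definition ddx :: "('k::field) ser \<Rightarrow> 'k ser" where
  "ddx f = hder oneP f"

end

theory Submission
  imports Defs
begin

definition dl :: "ptree option \<Rightarrow> ('k::field) ser" where
  "dl S = (\<lambda>T. if T = S then 1 else 0)"

fun leavesP :: "ptree option \<Rightarrow> lbl list" where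
  "leavesP None = []" | "leavesP (Some t) = leaves t"

definition nlP :: "ptree option \<Rightarrow> nat" where "nlP S = length (leavesP S)"

definition OX :: "('k::field) ser \<Rightarrow> bool" where
  "OX F = (\<forall>S. F S \<noteq> 0 \<longrightarrow> wfP S \<and> only_x S)"

definition Dset :: "nat \<Rightarrow> ptree option \<Rightarrow> ptree option list set" where
  "Dset m T = {Ss. length Ss = m \<and> (\<forall>s\<in>set Ss. wfP s) \<and> bulletP Ss = T}"

definition apl :: "('k::field) ser list \<Rightarrow> ptree option list \<Rightarrow> 'k" where
  "apl fs Ss = (\<Prod>i<length fs. (fs!i) (Ss!i))"

lemma ser_prod_D: "ser_prod fs T = (\<Sum>Ss\<in>Dset (length fs) T. apl fs Ss)"
  by (simp add: ser_prod_def Dset_def apl_def)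

definition somes :: "ptree option list \<Rightarrow> ptree list" where
  "somes Os = [t. Some t \<leftarrow> Os]"

lemma somes_simps[simp]: "somes [] = []" "somes (None # xs) = somes xs"
  "somes (Some t # xs) = t # somes xs" "somes (xs @ ys) = somes xs @ somes ys"
  by (simp_all add: somes_def)

lemma somes_map_Some[simp]: "somes (map Some ts) = ts"
  by (induct ts) auto

definition bulletL :: "ptree list \<Rightarrow> ptree option" where
  "bulletL ts = (case ts of [] \<Rightarrow> None | [t] \<Rightarrow> Some t | _ \<Rightarrow> Some (Node ts))"

lemma bulletP_L: "bulletP Os = bulletL (somes Os)"
  by (simp add: bulletP_def bulletL_def somes_def Let_def)

lemma set_somes: "t \<in> set (somes Os) \<longleftrightarrow> Some t \<in> set Os"
  by (induct Os) (auto simp: somes_def split: option.splits)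

lemma wfP_simps[simp]: "wfP None" "wfP (Some t) = reduced t"
  by (simp_all add: wfP_def)

lemma only_x_simps[simp]: "only_x None" "only_x (Some t) = (LY \<notin> set (leaves t))"
  by (simp_all add: only_x_def)

lemma wfP_bulletL: "\<forall>t\<in>set ts. reduced t \<Longrightarrow> wfP (bulletL ts)"
  by (cases ts rule: remdups_adj.cases) (auto simp: bulletL_def)

lemma wfP_bulletP: "\<forall>s\<in>set Os. wfP s \<Longrightarrow> wfP (bulletP Os)"
  unfolding bulletP_L
  apply (rule wfP_bulletL)
  apply (auto simp: set_somes)
  by (metis wfP_simps(2))

lemma leavesP_bulletL: "leavesP (bulletL ts) = concat (map leaves ts)"
  by (cases ts rule: remdups_adj.cases) (auto simp: bulletL_def)

lemma concat_leavesP: "concat (map leavesP Os) = concat (map leaves (somes Os))"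
  by (induct Os) (auto simp: somes_def split: option.splits)

lemma leavesP_bulletP: "leavesP (bulletP Os) = concat (map leavesP Os)"
  by (simp add: bulletP_L leavesP_bulletL concat_leavesP)

lemma kids_bulletP:
  assumes "Some t \<in> set Os"
  shows "bulletP Os = Some t \<or> (\<exists>ts. bulletP Os = Some (Node ts) \<and> t \<in> set ts)"
proof -
  have "t \<in> set (somes Os)" using assms by (simp add: set_somes)
  then show ?thesis unfolding bulletP_L bulletL_def
    by (cases "somes Os" rule: remdups_adj.cases) auto
qed

definition kids :: "ptree option \<Rightarrow> ptree option set" where
  "kids T = insert None (insert T (case T of Some (Node ts) \<Rightarrow> Some ` set ts | _ \<Rightarrow> {}))"

lemma finite_kids: "finite (kids T)"
  by (auto simp: kids_def split: option.splits ptree.splits)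

lemma in_kids: "bulletP Os = T \<Longrightarrow> s \<in> set Os \<Longrightarrow> s \<in> kids T"
  apply (cases s)
   apply (simp add: kids_def)
  using kids_bulletP by (fastforce simp: kids_def)

lemma finite_Dset: "finite (Dset m T)"
proof -
  have "Dset m T \<subseteq> {Ss. set Ss \<subseteq> kids T \<and> length Ss = m}"
    by (auto simp: Dset_def in_kids)
  moreover have "finite {Ss. set Ss \<subseteq> kids T \<and> length Ss = m}"
    by (rule finite_lists_length_eq[OF finite_kids])
  ultimately show ?thesis by (rule finite_subset)
qed

lemma apl_zip: "length Ss = length fs \<Longrightarrow> apl fs Ss = prod_list (map (\<lambda>(f,s). f s) (zip fs Ss))"
proof (induct fs arbitrary: Ss)
  case Nil then show ?case by (simp add: apl_def)
next
  case (Cons f fs)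
  then obtain s ss where "Ss = s # ss" by (cases Ss) auto
  with Cons have "apl fs ss = prod_list (map (\<lambda>(f,s). f s) (zip fs ss))" by simp
  then show ?case using \<open>Ss = s # ss\<close> unfolding apl_def
    by (simp del: prod.lessThan_Suc add: prod.lessThan_Suc_shift)
qed

lemma apl_upd: "j < length fs \<Longrightarrow> apl (fs[j := h]) Ss = h (Ss!j) * (\<Prod>i\<in>{..<length fs}-{j}. (fs!i) (Ss!i))"
proof -
  assume j: "j < length fs"
  have "apl (fs[j := h]) Ss = (\<Prod>i<length fs. (fs[j := h] ! i) (Ss ! i))" by (simp add: apl_def)
  also have "\<dots> = (fs[j := h] ! j) (Ss ! j) * (\<Prod>i\<in>{..<length fs}-{j}. (fs[j := h] ! i) (Ss ! i))"
    using j by (subst prod.remove[of _ j]) auto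
  also have "\<dots> = h (Ss!j) * (\<Prod>i\<in>{..<length fs}-{j}. (fs!i) (Ss!i))"
    using j by (auto intro!: prod.cong)
  finally show ?thesis .
qed

lemma apl_nz: "apl fs Ss \<noteq> 0 \<Longrightarrow> i < length fs \<Longrightarrow> (fs!i) (Ss!i) \<noteq> 0"
  unfolding apl_def by auto

lemma ser_prod_nz: "ser_prod fs T \<noteq> 0 \<Longrightarrow> \<exists>Ss\<in>Dset (length fs) T. \<forall>i<length fs. (fs!i) (Ss!i) \<noteq> 0"
  unfolding ser_prod_D using apl_nz sum.neutral by metis

lemma Dset_mem: "Ss \<in> Dset m T \<longleftrightarrow> length Ss = m \<and> (\<forall>s\<in>set Ss. wfP s) \<and> bulletP Ss = T"
  by (simp add: Dset_def)

lemma apl_dl: "length Ss = length Us \<Longrightarrow> apl (map dl Us) Ss = (if Ss = Us then 1 else 0)"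
proof (cases "Ss = Us")
  case True then show ?thesis by (simp add: apl_def dl_def)
next
  case False
  assume l: "length Ss = length Us"
  then obtain i where i: "i < length Us" "Ss!i \<noteq> Us!i" using False nth_equalityI by metis
  then show ?thesis using False unfolding apl_def
    by (auto simp: dl_def prod_zero_iff intro!: bexI[where x=i])
qed

lemma ser_prod_dl: "\<forall>s\<in>set Us. wfP s \<Longrightarrow> ser_prod (map dl Us) = dl (bulletP Us)"
proof
  fix T assume w: "\<forall>s\<in>set Us. wfP s"
  have "ser_prod (map dl Us) T = (\<Sum>Ss\<in>Dset (length Us) T. if Ss = Us then 1 else 0)"
    unfolding ser_prod_D by (auto intro!: sum.cong simp: apl_dl Dset_mem)
  also have "\<dots> = dl (bulletP Us) T"
    using w by (auto simp: finite_Dset dl_def Dset_mem)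
  finally show "ser_prod (map dl Us) T = dl (bulletP Us) T" .
qed

lemma ser_prod_Nil: "ser_prod [] = oneP"
proof
  fix T
  have "Dset 0 T = (if T = None then {[]} else {})"
    by (auto simp: Dset_mem bulletP_def)
  then show "ser_prod [] T = oneP T" by (simp add: ser_prod_D apl_def oneP_def)
qed

lemma ser_prod_single: "\<forall>S. \<not> wfP S \<longrightarrow> F S = 0 \<Longrightarrow> ser_prod [F] = F"
proof
  fix T assume F: "\<forall>S. \<not> wfP S \<longrightarrow> F S = 0"
  have b: "bulletP [s] = s" for s by (cases s) (auto simp: bulletP_def)
  have "Dset 1 T = (if wfP T then {[T]} else {})"
    by (auto simp: Dset_mem b length_Suc_conv)
  then show "ser_prod [F] T = F T" using F by (simp add: ser_prod_D apl_def)
qed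

lemma ser_prod_remove_one: "ser_prod (xs @ oneP # ys) = ser_prod (xs @ ys)"
proof
  fix T
  define n where "n = length xs"
  define ins where "ins Rs = take n Rs @ None # drop n Rs" for Rs :: "ptree option list"
  define D where "D = Dset (length (xs @ ys)) T"
  define D' where "D' = Dset (length (xs @ oneP # ys)) T"
  have somes_ins: "somes (ins Rs) = somes Rs" for Rs
    unfolding ins_def by (metis append_take_drop_id somes_simps(2,4))
  have setins: "set (ins Rs) = insert None (set Rs)" for Rs
    unfolding ins_def by (metis Un_insert_right append_take_drop_id list.simps(15) set_append)
  have insD: "ins Rs \<in> D'" if "Rs \<in> D" for Rs
    using that unfolding D_def D'_def Dset_mem bulletP_L somes_ins setins
    by (auto simp: ins_def n_def)
  have inj: "inj_on ins D"
  proof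
    fix Rs Rs' assume "Rs \<in> D" "Rs' \<in> D" "ins Rs = ins Rs'"
    then have l: "length Rs = length Rs'" "n \<le> length Rs" by (auto simp: D_def Dset_mem n_def)
    from \<open>ins Rs = ins Rs'\<close> have "take n Rs = take n Rs' \<and> drop n Rs = drop n Rs'"
      unfolding ins_def using l by (simp add: append_eq_append_conv)
    then show "Rs = Rs'" by (metis append_take_drop_id)
  qed
  have zero: "apl (xs @ oneP # ys) Ss = 0" if "Ss \<in> D' - ins ` D" for Ss
  proof (rule ccontr)
    assume nz: "apl (xs @ oneP # ys) Ss \<noteq> 0"
    have "((xs @ oneP # ys) ! n) (Ss ! n) \<noteq> 0" by (rule apl_nz[OF nz]) (simp add: n_def)
    then have "Ss ! n = None" by (simp add: n_def oneP_def split: if_splits)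
    have lS: "length Ss = Suc (length xs + length ys)" using that by (simp add: D'_def Dset_mem)
    define Rs where "Rs = take n Ss @ drop (Suc n) Ss"
    have "ins Rs = Ss" unfolding ins_def Rs_def using lS \<open>Ss ! n = None\<close>
      by (simp add: n_def) (metis Cons_nth_drop_Suc append_take_drop_id lessI less_add_Suc1 )
    moreover have "Rs \<in> D"
    proof -
      have "set Rs \<subseteq> set Ss" unfolding Rs_def
        by (metis Un_subset_iff append_take_drop_id set_append set_drop_subset sup.coboundedI1 sup_ge1)
      moreover have "somes Rs = somes Ss" using \<open>ins Rs = Ss\<close> somes_ins by metis
      moreover have "(\<forall>s\<in>set Ss. wfP s) \<and> bulletP Ss = T" using that by (simp add: D'_def Dset_mem)
      moreover have "length Rs = length (xs @ ys)" using lS by (simp add: Rs_def n_def)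
      ultimately show ?thesis unfolding D_def Dset_mem bulletP_L by (metis subsetD)
    qed
    ultimately show False using that by auto
  qed
  have aplins: "apl (xs @ oneP # ys) (ins Rs) = apl (xs @ ys) Rs" if "Rs \<in> D" for Rs
  proof -
    have l: "length Rs = length xs + length ys" using that by (simp add: D_def Dset_mem)
    have lt: "length (take n Rs) = length xs" using l by (simp add: n_def)
    have e1: "zip (xs @ oneP # ys) (ins Rs) = zip xs (take n Rs) @ (oneP, None) # zip ys (drop n Rs)"
      unfolding ins_def using zip_append[OF lt[symmetric], of "oneP # ys" "None # drop n Rs"] by simp
    have e2: "zip (xs @ ys) Rs = zip xs (take n Rs) @ zip ys (drop n Rs)"
      using zip_append[OF lt[symmetric], of ys "drop n Rs"] by simp
    have l2: "length (ins Rs) = length (xs @ oneP # ys)" using l by (simp add: ins_def n_def)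
    have l3: "length Rs = length (xs @ ys)" using l by simp
    show ?thesis using l l2 by (simp only: apl_zip[OF l2] apl_zip[OF l3] e1 e2) (simp add: oneP_def)
  qed
  have "ser_prod (xs @ oneP # ys) T = (\<Sum>Ss\<in>D'. apl (xs @ oneP # ys) Ss)"
    by (simp add: ser_prod_D D'_def)
  also have "\<dots> = (\<Sum>Ss\<in>ins ` D. apl (xs @ oneP # ys) Ss)"
    by (rule sum.mono_neutral_right) (use insD zero in \<open>auto simp: D'_def finite_Dset\<close>)
  also have "\<dots> = (\<Sum>Rs\<in>D. apl (xs @ oneP # ys) (ins Rs))"
    by (rule sum.reindex[OF inj, unfolded comp_def])
  also have "\<dots> = (\<Sum>Rs\<in>D. apl (xs @ ys) Rs)" by (rule sum.cong) (auto simp: aplins)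
  also have "\<dots> = ser_prod (xs @ ys) T" by (simp add: ser_prod_D D_def)
  finally show "ser_prod (xs @ oneP # ys) T = ser_prod (xs @ ys) T" .
qed

definition wfs :: "('k::field) ser \<Rightarrow> bool" where
  "wfs F = (\<forall>S. \<not> wfP S \<longrightarrow> F S = 0)"

lemma ser_prod_wf: "ser_prod fs T \<noteq> 0 \<Longrightarrow> wfP T"
  using ser_prod_nz wfP_bulletP by (fastforce simp: Dset_mem)

lemma wfs_ser_prod: "wfs (ser_prod fs)"
  using ser_prod_wf wfs_def by blast

lemma wfs_phi_tree: "wfs a \<Longrightarrow> wfs b \<Longrightarrow> wfs (phi_tree a b t)"
proof (cases t)
  case (Leaf l) then show "wfs a \<Longrightarrow> wfs b \<Longrightarrow> wfs (phi_tree a b t)" by (cases l) auto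
next
  case (Node ts) then show ?thesis by (simp add: wfs_ser_prod)
qed

lemma wfs_oneP: "wfs oneP" by (simp add: wfs_def oneP_def)

lemma wfs_phi_P: "wfs a \<Longrightarrow> wfs b \<Longrightarrow> wfs (phi_P a b S)"
  by (cases S) (auto simp: phi_P_def wfs_oneP wfs_phi_tree)

lemma ser_prod_somes:
  "ser_prod (pre @ map (phi_P a b) Os) = ser_prod (pre @ map (phi_tree a b) (somes Os))"
proof (induct Os arbitrary: pre)
  case Nil then show ?case by simp
next
  case (Cons oo Os)
  show ?case
  proof (cases oo)
    case None
    then show ?thesis using Cons[of pre] by (simp add: phi_P_def ser_prod_remove_one)
  next
    case (Some t)
    then show ?thesis using Cons[of "pre @ [phi_tree a b t]"] by (simp add: phi_P_def)
  qed
qed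

lemma phiP_bullet:
  assumes "wfs a" "wfs b"
  shows "phi_P a b (bulletP Os) = ser_prod (map (phi_P a b) Os)"
proof -
  have "ser_prod (map (phi_P a b) Os) = ser_prod (map (phi_tree a b) (somes Os))"
    using ser_prod_somes[of "[]"] by simp
  moreover have "phi_P a b (bulletL ts) = ser_prod (map (phi_tree a b) ts)" for ts
  proof (cases ts rule: remdups_adj.cases)
    case 1 then show ?thesis by (simp add: bulletL_def phi_P_def ser_prod_Nil)
  next
    case (2 t) then show ?thesis
      using ser_prod_single[of "phi_tree a b t"] wfs_phi_tree[OF assms] by (simp add: bulletL_def phi_P_def wfs_def)
  next
    case (3 t1 t2 rest) then show ?thesis by (simp add: bulletL_def phi_P_def)
  qed
  ultimately show ?thesis by (simp add: bulletP_L)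
qed

lemma only_x_leavesP: "only_x S = (LY \<notin> set (leavesP S))"
  by (cases S) auto

lemma len_concat_nth: "length (concat (map f xs)) = (\<Sum>i<length xs. length (f (xs!i)))"
  by (simp add: length_concat sum_list_sum_nth atLeast0LessThan)

lemma nlP_bullet: "nlP (bulletP Ss) = (\<Sum>i<length Ss. nlP (Ss!i))"
  by (simp add: nlP_def leavesP_bulletP len_concat_nth)

lemma ser_prod_OX: "\<forall>f\<in>set fs. OX f \<Longrightarrow> OX (ser_prod fs)"
  unfolding OX_def
proof (intro allI impI)
  fix T assume ox: "\<forall>f\<in>set fs. \<forall>S. f S \<noteq> 0 \<longrightarrow> wfP S \<and> only_x S" and nz: "ser_prod fs T \<noteq> 0"
  from ser_prod_nz[OF nz] obtain Ss where Ss: "Ss \<in> Dset (length fs) T" "\<forall>i<length fs. (fs!i) (Ss!i) \<noteq> 0" by blast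
  have "only_x s" if "s \<in> set Ss" for s
  proof -
    from that obtain i where "i < length Ss" "s = Ss!i" by (metis in_set_conv_nth)
    moreover have "fs!i \<in> set fs" using \<open>i < length Ss\<close> Ss(1) by (simp add: Dset_mem)
    ultimately show ?thesis using Ss ox by (metis Dset_mem)
  qed
  then show "wfP T \<and> only_x T"
    using Ss ser_prod_wf[OF nz] by (auto simp: Dset_mem only_x_leavesP leavesP_bulletP)
qed

lemma degx_le: "degx S \<le> nlP S"
  by (cases S) (auto simp: degx_def nlP_def count_le_length)

lemma phi_tree_deg:
  assumes g: "OX g" "ordx_ge g 1"
  shows "phi_tree g ser_zero t T \<noteq> 0 \<Longrightarrow> LY \<notin> set (leaves t) \<and> length (leaves t) \<le> nlP T \<and> wfP T \<and> only_x T"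
proof (induct t arbitrary: T)
  case (Leaf l)
  show ?case
  proof (cases l)
    case LX
    then have "g T \<noteq> 0" using Leaf by simp
    then show ?thesis using g degx_le[of T] LX by (force simp: OX_def ordx_ge_def)
  next
    case LY then show ?thesis using Leaf by (simp add: ser_zero_def)
  qed
next
  case (Node ts)
  let ?G = "phi_tree g ser_zero"
  from Node.prems have nz: "ser_prod (map ?G ts) T \<noteq> 0" by simp
  from ser_prod_nz[OF nz] obtain Ss where Ss: "Ss \<in> Dset (length ts) T"
    "\<forall>i<length ts. ?G (ts!i) (Ss!i) \<noteq> 0" by auto
  have IH: "LY \<notin> set (leaves (ts!i)) \<and> length (leaves (ts!i)) \<le> nlP (Ss!i) \<and> wfP (Ss!i) \<and> only_x (Ss!i)"
    if "i < length ts" for i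
    using Node.hyps[of "ts!i" "Ss!i"] Ss that by auto
  have lS: "length Ss = length ts" using Ss by (simp add: Dset_mem)
  have T: "T = bulletP Ss" using Ss by (simp add: Dset_mem)
  have "length (leaves (Node ts)) = (\<Sum>i<length ts. length (leaves (ts!i)))"
    by (simp add: len_concat_nth)
  also have "\<dots> \<le> (\<Sum>i<length ts. nlP (Ss!i))" by (rule sum_mono) (use IH in auto)
  also have "\<dots> = nlP T" using T lS nlP_bullet by simp
  finally have 1: "length (leaves (Node ts)) \<le> nlP T" .
  have 2: "LY \<notin> set (leaves (Node ts))" using IH by (auto simp: in_set_conv_nth)
  have 3: "only_x T" using IH lS unfolding T only_x_leavesP leavesP_bulletP by (auto simp: in_set_conv_nth)
  show ?case using 1 2 3 ser_prod_wf[OF nz] by simp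
qed

lemma reduced_leaves_ne: "reduced t \<Longrightarrow> leaves t \<noteq> []"
proof (induct t)
  case (Leaf l) then show ?case by simp
next
  case (Node ts)
  then obtain t where "t \<in> set ts" by (cases ts) auto
  then show ?case using Node by auto
qed

lemma sum_list_ge_elem:
  fixes f :: "'a \<Rightarrow> nat"
  assumes "t \<in> set ts" "2 \<le> length ts" "\<forall>s\<in>set ts. 1 \<le> f s"
  shows "f t + 1 \<le> sum_list (map f ts)"
proof -
  have e: "sum_list (map f ts) = f t + sum_list (map f (remove1 t ts))"
    using assms(1) by (rule sum_list_map_remove1)
  have "remove1 t ts \<noteq> []" using assms(1,2) by (metis One_nat_def Suc_1 length_remove1 Suc_le_eq diff_Suc_1 length_0_conv less_irrefl_nat zero_less_diff)
  then obtain s where s: "s \<in> set (remove1 t ts)" by (cases "remove1 t ts") auto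
  then have "s \<in> set ts" by (meson notin_set_remove1)
  then have "1 \<le> f s" using assms(3) by auto
  moreover have "f s \<le> sum_list (map f (remove1 t ts))" using s by (rule member_le_sum_list[of _ "map f _", simplified, OF imageI])
  ultimately show ?thesis using e by linarith
qed

lemma fin_red: "finite {t. reduced t \<and> length (leaves t) \<le> n}"
proof (induct n rule: less_induct)
  case (less n)
  show ?case
  proof (cases n)
    case 0
    then have "{t. reduced t \<and> length (leaves t) \<le> n} = {}" using reduced_leaves_ne by auto
    then show ?thesis by (metis finite.emptyI)
  next
    case (Suc m)
    let ?F = "{t. reduced t \<and> length (leaves t) \<le> m}"
    have fF: "finite ?F" using less Suc by simp
    have "{t. reduced t \<and> length (leaves t) \<le> n} \<subseteq> range Leaf \<union> Node ` {ts. set ts \<subseteq> ?F \<and> length ts \<le> n}"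
    proof
      fix t assume t: "t \<in> {t. reduced t \<and> length (leaves t) \<le> n}"
      show "t \<in> range Leaf \<union> Node ` {ts. set ts \<subseteq> ?F \<and> length ts \<le> n}"
      proof (cases t)
        case (Leaf l) then show ?thesis by simp
      next
        case (Node ts)
        have red: "2 \<le> length ts" "\<forall>s\<in>set ts. reduced s" using t Node by auto
        have ge1: "\<forall>s\<in>set ts. 1 \<le> length (leaves s)"
          using red reduced_leaves_ne by (simp add: Suc_le_eq)
        have tot: "sum_list (map (\<lambda>s. length (leaves s)) ts) \<le> n"
          using t Node by (simp add: length_concat comp_def)
        have "set ts \<subseteq> ?F"
        proof
          fix s assume "s \<in> set ts"
          then have "length (leaves s) + 1 \<le> sum_list (map (\<lambda>s. length (leaves s)) ts)"
            using sum_list_ge_elem[OF _ red(1) ge1] by blast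
          then show "s \<in> ?F" using tot Suc red \<open>s \<in> set ts\<close> by auto
        qed
        moreover have "length ts \<le> n"
        proof -
          have "length ts = sum_list (map (\<lambda>s. 1::nat) ts)" by (simp add: sum_list_triv)
          also have "\<dots> \<le> sum_list (map (\<lambda>s. length (leaves s)) ts)"
            by (rule sum_list_mono) (use ge1 in auto)
          finally show ?thesis using tot by linarith
        qed
        ultimately show ?thesis using Node by auto
      qed
    qed
    moreover have "finite (range Leaf \<union> Node ` {ts. set ts \<subseteq> ?F \<and> length ts \<le> n})"
    proof -
      have "finite (range Leaf)"
      proof -
        have "(UNIV::lbl set) = {LX, LY}" by (auto intro: lbl.exhaust)
        then show ?thesis by (metis finite.emptyI finite.insertI finite_imageI)
      qed
      moreover have "finite {ts. set ts \<subseteq> ?F \<and> length ts \<le> n}" by (rule finite_lists_length_le[OF fF])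
      ultimately show ?thesis by simp
    qed
    ultimately show ?thesis by (rule finite_subset)
  qed
qed

definition WFX :: "nat \<Rightarrow> ptree option set" where
  "WFX N = {S. wfP S \<and> only_x S \<and> nlP S \<le> N}"

lemma finite_WFX: "finite (WFX N)"
proof -
  have "WFX N \<subseteq> insert None (Some ` {t. reduced t \<and> length (leaves t) \<le> N})"
  proof
    fix S assume "S \<in> WFX N"
    then show "S \<in> insert None (Some ` {t. reduced t \<and> length (leaves t) \<le> N})"
      by (cases S) (auto simp: WFX_def nlP_def)
  qed
  moreover have "finite (insert None (Some ` {t. reduced t \<and> length (leaves t) \<le> N}))"
    using fin_red by simp
  ultimately show ?thesis by (rule finite_subset)
qed

fun coll :: "ptree \<Rightarrow> ptree option" where
  "coll (Leaf LX) = Some (Leaf LX)"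
| "coll (Leaf LY) = None"
| "coll (Node ts) = bulletP (map coll ts)"

fun relab :: "ptree \<Rightarrow> ptree" where
  "relab (Leaf l) = Leaf LX"
| "relab (Node ts) = Node (map relab ts)"

lemma wfP_coll: "wfP (coll z)"
proof (induct z)
  case (Leaf l) then show ?case by (cases l) auto
next
  case (Node ts) then show ?case by (auto intro!: wfP_bulletP)
qed

lemma dl_xser: "xser = dl (Some (Leaf LX))" by (auto simp: xser_def dl_def)
lemma dl_oneP: "oneP = dl None" by (auto simp: oneP_def dl_def)

lemma reduced_relab: "reduced z \<Longrightarrow> reduced (relab z)"
  by (induct z) auto

lemma phi_x1: "phi_tree (xser::'k::field ser) oneP z = dl (coll z)"
proof (induct z)
  case (Leaf l) then show ?case by (cases l) (auto simp: dl_xser dl_oneP)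
next
  case (Node ts)
  then have e: "map (phi_tree (xser::'k ser) oneP) ts = map dl (map coll ts)" using Node.hyps by auto
  have "phi_tree (xser::'k ser) oneP (Node ts) = ser_prod (map dl (map coll ts))" by (simp only: phi_tree.simps e)
  also have "\<dots> = dl (bulletP (map coll ts))" by (rule ser_prod_dl) (auto simp: wfP_coll)
  finally show ?case by simp
qed

lemma phi_xx: "reduced z \<Longrightarrow> phi_tree (xser::'k::field ser) xser z = dl (Some (relab z))"
proof (induct z)
  case (Leaf l) then show ?case by (cases l) (auto simp: dl_xser)
next
  case (Node ts)
  then have e: "map (phi_tree (xser::'k ser) xser) ts = map dl (map Some (map relab ts))" using Node.hyps Node.prems by auto
  have b: "bulletP (map Some (map relab ts)) = Some (Node (map relab ts))"
    using Node.prems by (cases "map relab ts" rule: remdups_adj.cases) (auto simp: bulletP_L bulletL_def)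
  have "phi_tree (xser::'k ser) xser (Node ts) = ser_prod (map dl (map Some (map relab ts)))" by (simp only: phi_tree.simps e)
  also have "\<dots> = dl (bulletP (map Some (map relab ts)))"
    by (rule ser_prod_dl) (use Node.prems reduced_relab in auto)
  finally show ?case using b by simp
qed

lemma dlist_conv: "dlist ts = concat (map (\<lambda>k. map (\<lambda>z. ts[k := z]) (dtree (ts!k))) [0..<length ts])"
proof (induct ts)
  case Nil then show ?case by simp
next
  case (Cons t ts)
  have "[0..<length (t#ts)] = 0 # map Suc [0..<length ts]" by (simp add: upt_conv_Cons map_Suc_upt del: upt_Suc)
  then show ?case using Cons by (simp add: comp_def map_concat)
qed

lemma set_dtree_Node: "z \<in> set (dtree (Node ts)) \<longleftrightarrow> (\<exists>k<length ts. \<exists>z'\<in>set (dtree (ts!k)). z = Node (ts[k := z']))"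
  by (auto simp: dlist_conv image_iff)

definition cx :: "ptree \<Rightarrow> nat" where "cx t = count_list (leaves t) LX"
definition cy :: "ptree \<Rightarrow> nat" where "cy t = count_list (leaves t) LY"

lemma count_list_concat: "count_list (concat xs) l = sum_list (map (\<lambda>x. count_list x l) xs)"
  by (induct xs) auto

lemma sum_list_update_nat:
  "k < length ts \<Longrightarrow> sum_list (map f (ts[k:=x])) + f (ts!k) = sum_list (map f ts) + (f x :: nat)"
proof (induct ts arbitrary: k)
  case Nil then show ?case by simp
next
  case (Cons t ts) then show ?case by (cases k) auto
qed

lemma cx_Node: "cx (Node ts) = sum_list (map cx ts)"
  unfolding cx_def by (simp add: count_list_concat comp_def)
lemma cy_Node: "cy (Node ts) = sum_list (map cy ts)"
  unfolding cy_def by (simp add: count_list_concat comp_def)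

lemma dtree_props:
  "z \<in> set (dtree t) \<Longrightarrow> (reduced t \<longrightarrow> reduced z) \<and> relab z = relab t \<and> cx z + 1 = cx t \<and> cy z = cy t + 1
     \<and> length (leaves z) = length (leaves t)"
proof (induct t arbitrary: z)
  case (Leaf l) then show ?case by (cases l) (auto simp: cx_def cy_def)
next
  case (Node ts)
  from Node.prems have "\<exists>k<length ts. \<exists>z'\<in>set (dtree (ts!k)). z = Node (ts[k := z'])"
    by (simp only: set_dtree_Node)
  then obtain k z' where k: "k < length ts" "z' \<in> set (dtree (ts!k))" "z = Node (ts[k := z'])"
    by blast
  have IH: "(reduced (ts!k) \<longrightarrow> reduced z') \<and> relab z' = relab (ts!k) \<and> cx z' + 1 = cx (ts!k) \<and> cy z' = cy (ts!k) + 1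
     \<and> length (leaves z') = length (leaves (ts!k))"
    using Node.hyps[of "ts!k" z'] k by auto
  have r: "reduced (Node ts) \<longrightarrow> reduced z"
    using IH k set_update_subset_insert[of ts k z'] by (auto simp: nth_mem)
  have "map relab (ts[k := z']) = (map relab ts)[k := relab (ts!k)]" using IH by (simp add: map_update)
  then have rl: "relab z = relab (Node ts)" using k by (simp, metis list_update_id nth_map)
  have c1: "cx z + 1 = cx (Node ts)"
    using sum_list_update_nat[OF k(1), of cx z'] IH k by (simp add: cx_Node)
  have c2: "cy z = cy (Node ts) + 1"
    using sum_list_update_nat[OF k(1), of cy z'] IH k by (simp add: cy_Node)
  have l: "length (leaves z) = length (leaves (Node ts))"
    using sum_list_update_nat[OF k(1), of "\<lambda>s. length (leaves s)" z'] IH k by (simp add: length_concat comp_def)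
  show ?case using r rl c1 c2 l by blast
qed

lemma length_dtree: "length (dtree t) = cx t"
proof (induct t)
  case (Leaf l) then show ?case by (cases l) (auto simp: cx_def)
next
  case (Node ts)
  have "length (dtree (Node ts)) = (\<Sum>k<length ts. length (dtree (ts!k)))"
    by (simp add: dlist_conv length_concat comp_def sum_list_sum_nth atLeast0LessThan)
  also have "\<dots> = (\<Sum>k<length ts. cx (ts!k))" using Node by (auto intro!: sum.cong)
  also have "\<dots> = cx (Node ts)" by (simp add: cx_Node sum_list_sum_nth atLeast0LessThan)
  finally show ?case .
qed

definition dels :: "ptree \<Rightarrow> ptree option list" where "dels t = map coll (dtree t)"

fun delsP :: "ptree option \<Rightarrow> ptree option list" where
  "delsP None = []" | "delsP (Some t) = dels t"

lemma coll_id: "reduced t \<Longrightarrow> LY \<notin> set (leaves t) \<Longrightarrow> coll t = Some t"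
proof (induct t)
  case (Leaf l) then show ?case by (cases l) auto
next
  case (Node ts)
  then have mc: "map coll ts = map Some ts" by auto
  have b: "bulletP (map Some ts) = Some (Node ts)" using Node.prems
    by (cases ts rule: remdups_adj.cases) (auto simp: bulletP_L bulletL_def)
  show ?case by (simp only: coll.simps mc b)
qed

lemma leaves_coll: "leavesP (coll z) = filter (\<lambda>l. l = LX) (leaves z)"
proof (induct z)
  case (Leaf l) then show ?case by (cases l) auto
next
  case (Node ts)
  then have e: "map (\<lambda>x. leavesP (coll x)) ts = map (\<lambda>x. filter (\<lambda>l. l = LX) (leaves x)) ts" by auto
  have "leavesP (coll (Node ts)) = concat (map (\<lambda>x. leavesP (coll x)) ts)" by (simp add: leavesP_bulletP comp_def)
  also have "\<dots> = concat (map (\<lambda>x. filter (\<lambda>l. l = LX) (leaves x)) ts)" by (simp only: e)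
  also have "\<dots> = filter (\<lambda>l. l = LX) (leaves (Node ts))" by (simp add: filter_concat comp_def)
  finally show ?case .
qed

lemma dels_Node:
  assumes "\<forall>s\<in>set ts. reduced s \<and> LY \<notin> set (leaves s)"
  shows "dels (Node ts) = concat (map (\<lambda>k. map (\<lambda>oo. bulletP ((map Some ts)[k := oo])) (dels (ts!k))) [0..<length ts])"
proof -
  have mc: "map coll ts = map Some ts" using assms coll_id by auto
  have "coll (Node (ts[k := z])) = bulletP ((map Some ts)[k := coll z])" for k z
    by (simp add: map_update mc)
  then show ?thesis by (simp add: dels_def dlist_conv map_concat comp_def)
qed

lemma upt_Suc_shift: "[0..<Suc n] = 0 # map Suc [0..<n]"
  by (simp add: upt_conv_Cons map_Suc_upt del: upt_Suc)

lemma dels_split: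
  assumes "\<forall>Os Os'. somes Os = somes Os' \<longrightarrow> H Os = H Os'"
  shows "concat (map (\<lambda>j. map (\<lambda>oo. H (Us[j:=oo])) (delsP (Us!j))) [0..<length Us])
       = concat (map (\<lambda>k. map (\<lambda>oo. H ((map Some (somes Us))[k:=oo])) (dels (somes Us ! k))) [0..<length (somes Us)])"
  using assms
proof (induct Us arbitrary: H)
  case Nil show ?case by simp
next
  case (Cons u Us)
  show ?case
  proof (cases u)
    case None
    let ?H = "\<lambda>X. H (None # X)"
    have inv: "\<forall>Os Os'. somes Os = somes Os' \<longrightarrow> ?H Os = ?H Os'"
      by (intro allI impI, rule Cons.prems[rule_format]) simp
    have "concat (map (\<lambda>j. map (\<lambda>oo. H ((u#Us)[j:=oo])) (delsP ((u#Us)!j))) [0..<length (u#Us)])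
        = concat (map (\<lambda>j. map (\<lambda>oo. ?H (Us[j:=oo])) (delsP (Us!j))) [0..<length Us])"
      using None by (simp add: upt_Suc_shift comp_def del: upt_Suc)
    also have "\<dots> = concat (map (\<lambda>k. map (\<lambda>oo. ?H ((map Some (somes Us))[k:=oo])) (dels (somes Us ! k))) [0..<length (somes Us)])"
      by (rule Cons.hyps[OF inv])
    also have "\<dots> = concat (map (\<lambda>k. map (\<lambda>oo. H ((map Some (somes Us))[k:=oo])) (dels (somes Us ! k))) [0..<length (somes Us)])"
    proof -
      have "?H X = H X" for X using Cons.prems[rule_format, of "None # X" X] by simp
      then show ?thesis by simp
    qed
    finally show ?thesis using None by simp
  next
    case (Some t)
    let ?H = "\<lambda>X. H (Some t # X)"
    have inv: "\<forall>Os Os'. somes Os = somes Os' \<longrightarrow> ?H Os = ?H Os'"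
      by (intro allI impI, rule Cons.prems[rule_format]) simp
    have e0: "map (\<lambda>oo. H (oo # Us)) (dels t) = map (\<lambda>oo. H (oo # map Some (somes Us))) (dels t)"
    proof -
      have "somes (oo # Us) = somes (oo # map Some (somes Us))" for oo
        by (cases oo) auto
      then have "H (oo # Us) = H (oo # map Some (somes Us))" for oo by (rule Cons.prems[rule_format])
      then show ?thesis by simp
    qed
    have "concat (map (\<lambda>j. map (\<lambda>oo. H ((u#Us)[j:=oo])) (delsP ((u#Us)!j))) [0..<length (u#Us)])
        = map (\<lambda>oo. H (oo # Us)) (dels t) @ concat (map (\<lambda>j. map (\<lambda>oo. ?H (Us[j:=oo])) (delsP (Us!j))) [0..<length Us])"
      using Some by (simp add: upt_Suc_shift comp_def del: upt_Suc)
    also have "\<dots> = map (\<lambda>oo. H (oo # Us)) (dels t) @ concat (map (\<lambda>k. map (\<lambda>oo. ?H ((map Some (somes Us))[k:=oo])) (dels (somes Us ! k))) [0..<length (somes Us)])"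
      by (simp only: Cons.hyps[OF inv])
    also have "\<dots> = concat (map (\<lambda>k. map (\<lambda>oo. H ((map Some (somes (u#Us)))[k:=oo])) (dels (somes (u#Us) ! k))) [0..<length (somes (u#Us))])"
      using Some e0 by (simp add: upt_Suc_shift comp_def del: upt_Suc)
    finally show ?thesis .
  qed
qed

lemma bulletP_single: "bulletP [oo] = oo"
  by (cases oo) (auto simp: bulletP_def)

lemma delsP_bullet:
  assumes "\<forall>s\<in>set Us. wfP s \<and> only_x s"
  shows "delsP (bulletP Us) = concat (map (\<lambda>j. map (\<lambda>oo. bulletP (Us[j:=oo])) (delsP (Us!j))) [0..<length Us])"
proof -
  have inv: "\<forall>Os Os'. somes Os = somes Os' \<longrightarrow> bulletP Os = bulletP Os'" by (simp add: bulletP_L)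
  let ?ts = "somes Us"
  have ts: "\<forall>s\<in>set ?ts. reduced s \<and> LY \<notin> set (leaves s)"
  proof
    fix s assume "s \<in> set ?ts"
    then have "Some s \<in> set Us" by (simp add: set_somes)
    then have "wfP (Some s) \<and> only_x (Some s)" using assms by blast
    then show "reduced s \<and> LY \<notin> set (leaves s)" by simp
  qed
  have "delsP (bulletL ?ts) = concat (map (\<lambda>k. map (\<lambda>oo. bulletP ((map Some ?ts)[k:=oo])) (dels (?ts ! k))) [0..<length ?ts])"
  proof (cases ?ts rule: remdups_adj.cases)
    case 1 then show ?thesis by (simp add: bulletL_def)
  next
    case (2 t) then show ?thesis by (simp add: bulletL_def bulletP_single)
  next
    case (3 t1 t2 rest)
    then have "bulletL ?ts = Some (Node ?ts)" by (simp add: bulletL_def)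
    then show ?thesis using dels_Node[OF ts] by simp
  qed
  then show ?thesis using dels_split[OF inv, of Us] by (simp add: bulletP_L[of Us])
qed

lemma sum_nz: "sum f A \<noteq> 0 \<Longrightarrow> \<exists>x\<in>A. f x \<noteq> 0"
  by (meson sum.neutral)

lemma phi_sup:
  assumes "finite A" "{S. f S \<noteq> 0 \<and> phi_P g h S T \<noteq> 0} \<subseteq> A"
  shows "phi g h f T = (\<Sum>S\<in>A. f S * phi_P g h S T)"
  unfolding phi_def by (rule sum.mono_neutral_left) (use assms in auto)

lemma dser_sup:
  assumes "finite A" "{S. f S \<noteq> 0 \<and> T \<in> set (dP S)} \<subseteq> A"
  shows "dser f T = (\<Sum>S\<in>A. f S * of_nat (count_list (dP S) T))"
  unfolding dser_def by (rule sum.mono_neutral_left) (use assms in \<open>auto, metis count_list_0_iff of_nat_0\<close>)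

lemma sum_list_count:
  fixes h :: "'a \<Rightarrow> 'k::field"
  assumes "finite B" "set xs \<subseteq> B"
  shows "sum_list (map h xs) = (\<Sum>V\<in>B. of_nat (count_list xs V) * h V)"
  using assms(2)
proof (induct xs)
  case Nil then show ?case by simp
next
  case (Cons x xs)
  then have "x \<in> B" by simp
  have "(\<Sum>V\<in>B. of_nat (count_list (x#xs) V) * h V) = (\<Sum>V\<in>B. (if x = V then h V else 0) + of_nat (count_list xs V) * h V)"
    by (rule sum.cong) (auto simp: algebra_simps)
  also have "\<dots> = h x + (\<Sum>V\<in>B. of_nat (count_list xs V) * h V)"
    using \<open>x \<in> B\<close> assms(1) by (simp add: sum.distrib)
  finally show ?case using Cons by simp
qed

lemma sum_list_dl: "sum_list (map (\<lambda>x. dl x T) xs) = (of_nat (count_list xs T) :: 'k::field)"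
  by (induct xs) (auto simp: dl_def)

lemma dP_simps[simp]: "dP None = []" "dP (Some t) = map Some (dtree t)"
  by (simp_all add: dP_def)

lemma hder_expand:
  fixes F :: "('k::field) ser"
  assumes A: "finite A" and cond: "\<And>S W. F S \<noteq> 0 \<Longrightarrow> W \<in> set (dP S) \<Longrightarrow> phi_P xser h W T \<noteq> 0 \<Longrightarrow> S \<in> A"
  shows "hder h F T = (\<Sum>S\<in>A. F S * sum_list (map (\<lambda>W. phi_P xser h W T) (dP S)))"
proof -
  define B where "B = (\<Union>S\<in>A. set (dP S))"
  have fB: "finite B" unfolding B_def using A by simp
  have sub: "{V. dser F V \<noteq> 0 \<and> phi_P xser h V T \<noteq> 0} \<subseteq> B"
  proof safe
    fix V assume "dser F V \<noteq> 0" "phi_P xser h V T \<noteq> 0"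
    from sum_nz[OF \<open>dser F V \<noteq> 0\<close>[unfolded dser_def]] obtain S where "F S \<noteq> 0" "V \<in> set (dP S)" by auto
    then show "V \<in> B" using cond \<open>phi_P xser h V T \<noteq> 0\<close> unfolding B_def by blast
  qed
  have "hder h F T = (\<Sum>V\<in>B. dser F V * phi_P xser h V T)"
    unfolding hder_def by (rule phi_sup[OF fB sub])
  also have "\<dots> = (\<Sum>V\<in>B. (\<Sum>S\<in>A. F S * of_nat (count_list (dP S) V)) * phi_P xser h V T)"
  proof (rule sum.cong[OF refl])
    fix V assume "V \<in> B"
    show "dser F V * phi_P xser h V T = (\<Sum>S\<in>A. F S * of_nat (count_list (dP S) V)) * phi_P xser h V T"
    proof (cases "phi_P xser h V T = 0")
      case False
      have "dser F V = (\<Sum>S\<in>A. F S * of_nat (count_list (dP S) V))"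
        by (rule dser_sup[OF A]) (use cond False in auto)
      then show ?thesis by simp
    qed simp
  qed
  also have "\<dots> = (\<Sum>S\<in>A. F S * (\<Sum>V\<in>B. of_nat (count_list (dP S) V) * phi_P xser h V T))"
    by (simp add: sum_distrib_left sum_distrib_right mult.assoc sum.swap[of _ B])
  also have "\<dots> = (\<Sum>S\<in>A. F S * sum_list (map (\<lambda>W. phi_P xser h W T) (dP S)))"
  proof (rule sum.cong[OF refl])
    fix S assume "S \<in> A"
    then have "set (dP S) \<subseteq> B" unfolding B_def by auto
    then show "F S * (\<Sum>V\<in>B. of_nat (count_list (dP S) V) * phi_P xser h V T) = F S * sum_list (map (\<lambda>W. phi_P xser h W T) (dP S))"
      using sum_list_count[OF fB] by metis
  qed
  finally show ?thesis .
qed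

lemma length_filter_count: "length (filter (\<lambda>l. l = x) xs) = count_list xs x"
  by (induct xs) auto

lemma count_LX_onlyx: "LY \<notin> set xs \<Longrightarrow> count_list xs LX = length xs"
proof (induct xs)
  case Nil then show ?case by simp
next
  case (Cons a xs) then show ?case by (cases a) auto
qed

lemma relab_id: "LY \<notin> set (leaves t) \<Longrightarrow> relab t = t"
proof (induct t)
  case (Leaf l) then show ?case by (cases l) auto
next
  case (Node ts) then show ?case by (auto intro: map_idI)
qed

lemma dels_props:
  assumes "reduced s" "LY \<notin> set (leaves s)" "oo \<in> set (dels s)"
  shows "wfP oo \<and> only_x oo \<and> nlP oo + 1 = length (leaves s)"
proof -
  from assms obtain z where z: "z \<in> set (dtree s)" "oo = coll z" by (auto simp: dels_def)
  have "cx z + 1 = cx s" using dtree_props[OF z(1)] by simp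
  moreover have "cx s = length (leaves s)" using assms(2) count_LX_onlyx by (simp add: cx_def)
  moreover have "nlP oo = cx z" using z by (simp add: nlP_def leaves_coll length_filter_count cx_def)
  moreover have "only_x oo" using z by (simp add: only_x_leavesP leaves_coll)
  ultimately show ?thesis using wfP_coll z by simp
qed

lemma ddx_exp:
  fixes F :: "('k::field) ser"
  assumes ox: "OX F" and A: "finite A" and cA: "\<And>S. wfP S \<Longrightarrow> only_x S \<Longrightarrow> nlP S = nlP T + 1 \<Longrightarrow> S \<in> A"
  shows "ddx F T = (\<Sum>S\<in>A. F S * of_nat (count_list (delsP S) T))"
proof -
  have "ddx F T = (\<Sum>S\<in>A. F S * sum_list (map (\<lambda>W. phi_P xser oneP W T) (dP S)))"
    unfolding ddx_def
  proof (rule hder_expand[OF A])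
    fix S W assume nz: "F S \<noteq> 0" "W \<in> set (dP S)" "phi_P xser oneP W T \<noteq> 0"
    from nz(1) ox have S: "wfP S" "only_x S" by (auto simp: OX_def)
    from nz(2) obtain s z where sz: "S = Some s" "W = Some z" "z \<in> set (dtree s)" by (cases S) auto
    have "T = coll z" using nz(3) sz by (simp add: phi_P_def phi_x1 dl_def split: if_splits)
    then have "T \<in> set (dels s)" using sz by (simp add: dels_def)
    then have "nlP T + 1 = length (leaves s)" using dels_props S sz by simp
    then show "S \<in> A" using cA S sz by (simp add: nlP_def)
  qed
  also have "\<dots> = (\<Sum>S\<in>A. F S * of_nat (count_list (delsP S) T))"
  proof (rule sum.cong[OF refl])
    fix S show "F S * sum_list (map (\<lambda>W. phi_P xser oneP W T) (dP S)) = F S * of_nat (count_list (delsP S) T)"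
    proof (cases S)
      case (Some s)
      have "map (\<lambda>W. phi_P (xser::'k ser) oneP W T) (dP S) = map (\<lambda>x. dl x T) (dels s)"
        using Some by (simp add: dels_def phi_P_def phi_x1)
      then have "sum_list (map (\<lambda>W. phi_P (xser::'k ser) oneP W T) (dP S)) = of_nat (count_list (dels s) T)"
        by (simp only: sum_list_dl)
      then show ?thesis using Some by simp
    qed simp
  qed
  finally show ?thesis .
qed

lemma hder_x:
  fixes F :: "('k::field) ser"
  assumes ox: "OX F"
  shows "hder xser F V = of_nat (nlP V) * F V"
proof -
  have "hder xser F V = (\<Sum>S\<in>{V}. F S * sum_list (map (\<lambda>W. phi_P xser xser W V) (dP S)))"
  proof (rule hder_expand)
    fix S W assume nz: "F S \<noteq> 0" "W \<in> set (dP S)" "phi_P xser xser W V \<noteq> 0"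
    from nz(1) ox have S: "wfP S" "only_x S" by (auto simp: OX_def)
    from nz(2) obtain s z where sz: "S = Some s" "W = Some z" "z \<in> set (dtree s)" by (cases S) auto
    have red: "reduced z" using dtree_props[OF sz(3)] S sz by simp
    have "V = Some (relab z)" using nz(3) sz red by (simp add: phi_P_def phi_xx dl_def split: if_splits)
    also have "relab z = s" using dtree_props[OF sz(3)] relab_id S sz by simp
    finally show "S \<in> {V}" using sz by simp
  qed simp
  also have "\<dots> = of_nat (nlP V) * F V"
  proof (cases "F V = 0")
    case False
    then have S: "wfP V" "only_x V" using ox by (auto simp: OX_def)
    show ?thesis
    proof (cases V)
      case (Some v)
      have "map (\<lambda>W. phi_P (xser::'k ser) xser W V) (dP V) = map (\<lambda>z. (1::'k)) (dtree v)"
      proof -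
        have "(\<lambda>W. phi_P (xser::'k ser) xser W V) (Some z) = 1" if z: "z \<in> set (dtree v)" for z
        proof -
          have "reduced z" "relab z = v" using dtree_props[OF z] S Some relab_id by auto
          then show ?thesis using Some by (simp add: phi_P_def phi_xx dl_def)
        qed
        then show ?thesis using Some by simp
      qed
      then have "sum_list (map (\<lambda>W. phi_P (xser::'k ser) xser W V) (dP V)) = of_nat (length (dtree v))"
        by (simp add: sum_list_triv)
      also have "\<dots> = of_nat (nlP V)" using S Some length_dtree count_LX_onlyx by (simp add: cx_def nlP_def)
      finally show ?thesis by simp
    qed (simp add: nlP_def)
  qed simp
  finally show ?thesis .
qed

lemma sp_zero: "j < length fs \<Longrightarrow> ser_prod (fs[j := (\<lambda>T. 0)]) T' = 0"
  unfolding ser_prod_D by (simp add: apl_upd)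

lemma sp_add: "j < length fs \<Longrightarrow> ser_prod (fs[j := (\<lambda>T. F1 T + F2 T)]) T' = ser_prod (fs[j := F1]) T' + ser_prod (fs[j := F2]) T'"
  unfolding ser_prod_D by (simp add: apl_upd sum.distrib algebra_simps)

lemma sp_smult: "j < length fs \<Longrightarrow> ser_prod (fs[j := (\<lambda>T. c * F T)]) T' = c * ser_prod (fs[j := F]) T'"
  unfolding ser_prod_D by (simp add: apl_upd sum_distrib_left algebra_simps)

lemma sp_sumlist: "j < length fs \<Longrightarrow> ser_prod (fs[j := (\<lambda>T. sum_list (map (\<lambda>oo. H oo T) os))]) T' = sum_list (map (\<lambda>oo. ser_prod (fs[j := H oo]) T') os)"
proof (induct os)
  case Nil then show ?case using sp_zero[OF Nil] by simp
next
  case (Cons oo os)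
  then show ?case using sp_add[OF Cons.prems, of "H oo" "\<lambda>T. sum_list (map (\<lambda>oo. H oo T) os)" T'] by simp
qed

lemma cy_zero: "cy z = 0 \<longleftrightarrow> LY \<notin> set (leaves z)"
  by (simp add: cy_def count_list_0_iff)

lemma phi_tree_noY: "LY \<notin> set (leaves z) \<Longrightarrow> phi_tree a h1 z = phi_tree a h2 z"
proof (induct z)
  case (Leaf l) then show ?case by (cases l) auto
next
  case (Node ts)
  then have "map (phi_tree a h1) ts = map (phi_tree a h2) ts" by auto
  then show ?case by (metis phi_tree.simps(3))
qed

lemma unique_one:
  fixes f :: "nat \<Rightarrow> nat"
  assumes "(\<Sum>i<n. f i) = 1"
  shows "\<exists>j<n. f j = 1 \<and> (\<forall>i<n. i \<noteq> j \<longrightarrow> f i = 0)"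
proof -
  from assms obtain j where j: "j < n" "f j \<noteq> 0" by (metis lessThan_iff sum.neutral zero_neq_one)
  have split: "(\<Sum>i<n. f i) = f j + (\<Sum>i\<in>{..<n}-{j}. f i)" using j by (simp add: sum.remove)
  have "f i = 0" if "i < n" "i \<noteq> j" for i
  proof -
    have "f i \<le> (\<Sum>i\<in>{..<n}-{j}. f i)" by (rule member_le_sum) (use that in auto)
    then show ?thesis using split assms j by linarith
  qed
  moreover have "f j = 1" using split assms j by linarith
  ultimately show ?thesis using j by blast
qed

lemma phi_tree_h_add:
  "cy z = 1 \<Longrightarrow> phi_tree a (ser_add h1 h2) z T = phi_tree a h1 z T + phi_tree a h2 z T"
proof (induct z arbitrary: T)
  case (Leaf l) then show ?case by (cases l) (auto simp: cy_def ser_add_def)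
next
  case (Node ts)
  have "(\<Sum>i<length ts. cy (ts!i)) = 1" using Node.prems
    by (simp add: cy_Node sum_list_sum_nth atLeast0LessThan)
  from unique_one[OF this] obtain j where j: "j < length ts" "cy (ts!j) = 1"
    "\<forall>i<length ts. i \<noteq> j \<longrightarrow> cy (ts!i) = 0" by blast
  let ?fs = "map (phi_tree a h1) ts"
  have IH: "phi_tree a (ser_add h1 h2) (ts!j) T = phi_tree a h1 (ts!j) T + phi_tree a h2 (ts!j) T" for T
    using Node.hyps[of "ts!j" T] j by simp
  have e1: "map (phi_tree a (ser_add h1 h2)) ts = ?fs[j := (\<lambda>T. phi_tree a h1 (ts!j) T + phi_tree a h2 (ts!j) T)]"
  proof (rule nth_equalityI)
    fix i assume "i < length (map (phi_tree a (ser_add h1 h2)) ts)"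
    then show "map (phi_tree a (ser_add h1 h2)) ts ! i = ?fs[j := (\<lambda>T. phi_tree a h1 (ts!j) T + phi_tree a h2 (ts!j) T)] ! i"
    proof (cases "i = j")
      case False
      then have "LY \<notin> set (leaves (ts!i))" using j \<open>i < _\<close> cy_zero by auto
      then show ?thesis using False \<open>i < _\<close> phi_tree_noY by (auto simp: nth_list_update)
    qed (use j IH in auto)
  qed simp
  have e2: "map (phi_tree a h2) ts = ?fs[j := phi_tree a h2 (ts!j)]"
  proof (rule nth_equalityI)
    fix i assume "i < length (map (phi_tree a h2) ts)"
    then show "map (phi_tree a h2) ts ! i = ?fs[j := phi_tree a h2 (ts!j)] ! i"
    proof (cases "i = j")
      case False
      then have "LY \<notin> set (leaves (ts!i))" using j \<open>i < _\<close> cy_zero by auto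
      then show ?thesis using False \<open>i < _\<close> phi_tree_noY by (auto simp: nth_list_update)
    qed (use j in auto)
  qed simp
  have e3: "?fs = ?fs[j := phi_tree a h1 (ts!j)]" using j by (metis list_update_id nth_map)
  show ?case
    apply (simp only: phi_tree.simps e1)
    apply (subst sp_add)
    using j apply simp
    apply (simp only: e2[symmetric] e3[symmetric])
    done
qed

lemma cond_1:
  fixes F :: "('k::field) ser"
  assumes "OX F" "F S \<noteq> 0" "W \<in> set (dP S)" "phi_P (xser::'k ser) oneP W T \<noteq> 0"
  shows "wfP S \<and> only_x S \<and> nlP S = nlP T + 1"
proof -
  from assms(1,2) have S: "wfP S" "only_x S" by (auto simp: OX_def)
  from assms(3) obtain s z where sz: "S = Some s" "W = Some z" "z \<in> set (dtree s)" by (cases S) auto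
  have "T = coll z" using assms(4) sz by (simp add: phi_P_def phi_x1 dl_def split: if_splits)
  then have "T \<in> set (dels s)" using sz by (simp add: dels_def)
  then have "nlP T + 1 = length (leaves s)" using dels_props S sz by simp
  then show ?thesis using S sz by (simp add: nlP_def)
qed

lemma cond_x:
  fixes F :: "('k::field) ser"
  assumes "OX F" "F S \<noteq> 0" "W \<in> set (dP S)" "phi_P (xser::'k ser) xser W T \<noteq> 0"
  shows "S = T"
proof -
  from assms(1,2) have S: "wfP S" "only_x S" by (auto simp: OX_def)
  from assms(3) obtain s z where sz: "S = Some s" "W = Some z" "z \<in> set (dtree s)" by (cases S) auto
  have red: "reduced z" using dtree_props[OF sz(3)] S sz by simp
  have "T = Some (relab z)" using assms(4) sz red by (simp add: phi_P_def phi_xx dl_def split: if_splits)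
  also have "relab z = s" using dtree_props[OF sz(3)] relab_id S sz by simp
  finally show "S = T" using sz by simp
qed

lemma phiP_1x:
  fixes F :: "('k::field) ser"
  assumes "OX F" "F S \<noteq> 0" "W \<in> set (dP S)"
  shows "phi_P (xser::'k ser) (ser_add oneP xser) W T = phi_P xser oneP W T + phi_P xser xser W T"
proof -
  from assms(1,2) have S: "wfP S" "only_x S" by (auto simp: OX_def)
  from assms(3) obtain s z where sz: "S = Some s" "W = Some z" "z \<in> set (dtree s)" by (cases S) auto
  have "cy z = 1" using dtree_props[OF sz(3)] S sz cy_zero by simp
  then show ?thesis using sz by (simp add: phi_P_def phi_tree_h_add)
qed

lemma hder_sum:
  fixes F :: "('k::field) ser"
  assumes ox: "OX F"
  shows "hder (ser_add oneP xser) F T = ddx F T + hder xser F T"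
proof -
  let ?A = "WFX (nlP T + 1)"
  have fA: "finite ?A" by (rule finite_WFX)
  have h1: "hder oneP F T = (\<Sum>S\<in>?A. F S * sum_list (map (\<lambda>W. phi_P xser oneP W T) (dP S)))"
    by (rule hder_expand[OF fA]) (use cond_1[OF ox] in \<open>auto simp: WFX_def\<close>)
  have hx: "hder xser F T = (\<Sum>S\<in>?A. F S * sum_list (map (\<lambda>W. phi_P xser xser W T) (dP S)))"
  proof (rule hder_expand[OF fA])
    fix S W assume a: "F S \<noteq> 0" "W \<in> set (dP S)" "phi_P (xser::'k ser) xser W T \<noteq> 0"
    then have "S = T" by (rule cond_x[OF ox])
    moreover have "wfP S" "only_x S" using a ox by (auto simp: OX_def)
    ultimately show "S \<in> ?A" by (auto simp: WFX_def)
  qed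
  have h2: "hder (ser_add oneP xser) F T = (\<Sum>S\<in>?A. F S * sum_list (map (\<lambda>W. phi_P xser (ser_add oneP xser) W T) (dP S)))"
  proof (rule hder_expand[OF fA])
    fix S W assume a: "F S \<noteq> 0" "W \<in> set (dP S)" "phi_P (xser::'k ser) (ser_add oneP xser) W T \<noteq> 0"
    then have "phi_P (xser::'k ser) oneP W T \<noteq> 0 \<or> phi_P (xser::'k ser) xser W T \<noteq> 0" using phiP_1x[OF ox a(1,2)] by auto
    moreover have "wfP S" "only_x S" using a ox by (auto simp: OX_def)
    ultimately show "S \<in> ?A" using cond_1[OF ox a(1,2)] cond_x[OF ox a(1,2)] by (auto simp: WFX_def)
  qed
  have "hder (ser_add oneP xser) F T = (\<Sum>S\<in>?A. F S * sum_list (map (\<lambda>W. phi_P xser oneP W T) (dP S))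
      + F S * sum_list (map (\<lambda>W. phi_P xser xser W T) (dP S)))"
    unfolding h2
  proof (rule sum.cong[OF refl])
    fix S assume "S \<in> ?A"
    show "F S * sum_list (map (\<lambda>W. phi_P xser (ser_add oneP xser) W T) (dP S)) =
      F S * sum_list (map (\<lambda>W. phi_P xser oneP W T) (dP S)) + F S * sum_list (map (\<lambda>W. phi_P xser xser W T) (dP S))"
    proof (cases "F S = 0")
      case False
      have "map (\<lambda>W. phi_P xser (ser_add oneP xser) W T) (dP S) = map (\<lambda>W. phi_P xser oneP W T + phi_P (xser::'k ser) xser W T) (dP S)"
        using phiP_1x[OF ox False] by simp
      then have "sum_list (map (\<lambda>W. phi_P xser (ser_add oneP xser) W T) (dP S)) = sum_list (map (\<lambda>W. phi_P xser oneP W T) (dP S)) + sum_list (map (\<lambda>W. phi_P (xser::'k ser) xser W T) (dP S))"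
        by (simp only: sum_list_addf)
      then show ?thesis by (simp add: algebra_simps)
    qed simp
  qed
  also have "\<dots> = ddx F T + hder xser F T" by (simp add: sum.distrib h1 hx ddx_def)
  finally show ?thesis .
qed

lemma phiP0_deg:
  fixes g :: "('k::field) ser"
  assumes g: "OX g" "ordx_ge g 1" and nz: "phi_P g ser_zero S T \<noteq> 0"
  shows "only_x S \<and> nlP S \<le> nlP T \<and> wfP T \<and> only_x T"
proof (cases S)
  case None
  then show ?thesis using nz by (simp add: phi_P_def oneP_def nlP_def split: if_splits)
next
  case (Some t)
  then show ?thesis using phi_tree_deg[OF g, of t T] nz by (simp add: phi_P_def nlP_def)
qed

lemma subst_exp:
  fixes g :: "('k::field) ser"
  assumes g: "OX g" "ordx_ge g 1" and A: "finite A"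
    and cA: "\<And>S. wfP S \<Longrightarrow> only_x S \<Longrightarrow> nlP S \<le> nlP T \<Longrightarrow> S \<in> A"
    and F: "\<And>S. F S \<noteq> 0 \<Longrightarrow> wfP S"
  shows "subst F g T = (\<Sum>S\<in>A. F S * phi_P g ser_zero S T)"
  unfolding subst_def
proof (rule phi_sup[OF A], safe)
  fix S assume a: "F S \<noteq> 0" "phi_P g ser_zero S T \<noteq> 0"
  from phiP0_deg[OF g a(2)] have "only_x S" "nlP S \<le> nlP T" by auto
  then show "S \<in> A" using cA F a(1) by blast
qed

lemma OX_phiP0:
  fixes g :: "('k::field) ser"
  assumes g: "OX g" "ordx_ge g 1"
  shows "OX (phi_P g ser_zero S)"
  using phiP0_deg[OF g] by (auto simp: OX_def)

lemma OX_subst: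
  fixes g :: "('k::field) ser"
  assumes g: "OX g" "ordx_ge g 1"
  shows "OX (subst F g)"
  unfolding OX_def
proof (intro allI impI)
  fix T assume "subst F g T \<noteq> 0"
  from sum_nz[OF this[unfolded subst_def phi_def]] obtain S where "phi_P g ser_zero S T \<noteq> 0" by auto
  then show "wfP T \<and> only_x T" using phiP0_deg[OF g] by blast
qed

lemma OX_ddx:
  fixes F :: "('k::field) ser"
  assumes ox: "OX F"
  shows "OX (ddx F)"
  unfolding OX_def
proof (intro allI impI)
  fix T assume nz: "ddx F T \<noteq> 0"
  have "ddx F T = (\<Sum>S\<in>WFX (nlP T + 1). F S * of_nat (count_list (delsP S) T))"
    by (rule ddx_exp[OF ox finite_WFX]) (auto simp: WFX_def)
  with nz have "(\<Sum>S\<in>WFX (nlP T + 1). F S * of_nat (count_list (delsP S) T)) \<noteq> 0" by simp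
  from sum_nz[OF this] obtain S where "F S * of_nat (count_list (delsP S) T) \<noteq> 0" by blast
  then have S0: "F S \<noteq> 0" "of_nat (count_list (delsP S) T) \<noteq> (0::'k)" by auto
  then have S: "F S \<noteq> 0" "count_list (delsP S) T \<noteq> 0" by (metis of_nat_0)+
  then have "wfP S" "only_x S" using ox by (auto simp: OX_def)
  moreover from S obtain s where "S = Some s" "T \<in> set (dels s)" by (cases S) (auto simp: count_list_0_iff)
  ultimately show "wfP T \<and> only_x T" using dels_props by auto
qed

lemma OX_hder_x:
  fixes F :: "('k::field) ser"
  assumes ox: "OX F"
  shows "OX (hder xser F)"
  using ox unfolding OX_def hder_x[OF ox] by auto

lemma OX_add: "OX F1 \<Longrightarrow> OX F2 \<Longrightarrow> OX (ser_add F1 F2)"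
  unfolding OX_def ser_add_def by (metis add.left_neutral add.right_neutral)

definition LC :: "nat \<Rightarrow> nat \<Rightarrow> ptree option list set" where
  "LC N m = {Us. set Us \<subseteq> WFX N \<and> length Us = m}"

lemma finite_LC: "finite (LC N m)"
  unfolding LC_def by (rule finite_lists_length_eq[OF finite_WFX])

lemma nlP_le_bullet: "i < length Ss \<Longrightarrow> nlP (Ss!i) \<le> nlP (bulletP Ss)"
  unfolding nlP_bullet by (rule member_le_sum) auto

lemma sp_expand:
  fixes fs :: "('k::field) ser list"
  assumes ox: "\<forall>f\<in>set fs. OX f" and U: "nlP U \<le> N"
  shows "ser_prod fs U = (\<Sum>Us\<in>LC N (length fs). apl fs Us * dl (bulletP Us) U)"
proof -
  let ?D = "Dset (length fs) U"
  let ?L = "LC N (length fs)"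
  have "ser_prod fs U = (\<Sum>Us\<in>?D. apl fs Us)" by (rule ser_prod_D)
  also have "\<dots> = (\<Sum>Us\<in>?D \<inter> ?L. apl fs Us)"
  proof (rule sum.mono_neutral_right[OF finite_Dset])
    show "?D \<inter> ?L \<subseteq> ?D" by blast
    show "\<forall>Us\<in>?D - ?D \<inter> ?L. apl fs Us = 0"
    proof (intro ballI, rule ccontr)
      fix Us assume Us: "Us \<in> ?D - ?D \<inter> ?L" and nz: "apl fs Us \<noteq> 0"
      have D: "length Us = length fs" "\<forall>s\<in>set Us. wfP s" "bulletP Us = U" using Us by (auto simp: Dset_mem)
      have "Us \<in> ?L" unfolding LC_def
      proof (safe)
        fix s assume "s \<in> set Us"
        then obtain i where i: "i < length Us" "s = Us!i" by (metis in_set_conv_nth)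
        have "(fs!i) (Us!i) \<noteq> 0" using apl_nz[OF nz] i D by simp
        moreover have "fs!i \<in> set fs" using i D by simp
        ultimately have "only_x s" using ox i by (auto simp: OX_def)
        moreover have "nlP s \<le> N" using nlP_le_bullet[OF i(1)] i D U by simp
        ultimately show "s \<in> WFX N" using D \<open>s \<in> set Us\<close> by (auto simp: WFX_def)
      qed (use D in auto)
      then show False using Us by blast
    qed
  qed
  also have "\<dots> = (\<Sum>Us\<in>{Us\<in>?L. bulletP Us = U}. apl fs Us)"
  proof (rule sum.cong)
    show "?D \<inter> ?L = {Us\<in>?L. bulletP Us = U}"
      by (auto simp: Dset_mem LC_def WFX_def)
  qed simp
  also have "\<dots> = (\<Sum>Us\<in>?L. apl fs Us * dl (bulletP Us) U)"
    by (simp add: sum.inter_filter[OF finite_LC] dl_def) (rule sum.cong, auto)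
  finally show ?thesis .
qed

definition Pj :: "('k::field) ser list \<Rightarrow> nat \<Rightarrow> ptree option list \<Rightarrow> 'k" where
  "Pj fs j Ss = (\<Prod>i\<in>{..<length fs}-{j}. (fs!i) (Ss!i))"

lemma apl_split: "j < length fs \<Longrightarrow> apl fs Ss = (fs!j) (Ss!j) * Pj fs j Ss"
  using apl_upd[of j fs "fs!j" Ss] by (simp add: Pj_def)

lemma apl_upd': "j < length fs \<Longrightarrow> apl (fs[j := h]) Ss = h (Ss!j) * Pj fs j Ss"
  using apl_upd[of j fs h Ss] by (simp add: Pj_def)

lemma Pj_upd: "Pj fs j (Ss[j := V]) = Pj fs j Ss"
  unfolding Pj_def by (rule prod.cong) (auto simp: nth_list_update)

lemma swap_reindex:
  fixes F :: "ptree option list \<Rightarrow> ptree option \<Rightarrow> 'k::comm_monoid_add"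
  assumes j: "j < m"
  shows "(\<Sum>Ts\<in>LC N m. \<Sum>V\<in>WFX N. F Ts V) = (\<Sum>Us\<in>LC N m. \<Sum>W\<in>WFX N. F (Us[j := W]) (Us!j))"
proof -
  let ?L = "LC N m" and ?C = "WFX N"
  let ?phi = "\<lambda>(Us, W). (Us[j := W], Us!j)"
  have pp: "?phi (?phi a) = a \<and> ?phi a \<in> ?L \<times> ?C" if ain: "a \<in> ?L \<times> ?C" for a
  proof -
    obtain Us W where a: "a = (Us, W)" "Us \<in> ?L" "W \<in> ?C" using ain by (cases a) auto
    then have l: "length Us = m" by (simp add: LC_def)
    show ?thesis using a l j by (auto simp: LC_def dest: set_update_subset_insert[THEN subsetD])
  qed
  have "(\<Sum>Ts\<in>?L. \<Sum>V\<in>?C. F Ts V) = (\<Sum>p\<in>?L \<times> ?C. F (fst p) (snd p))"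
    by (simp add: sum.cartesian_product case_prod_beta)
  also have "\<dots> = (\<Sum>p\<in>?L \<times> ?C. F (fst (?phi p)) (snd (?phi p)))"
    by (rule sum.reindex_bij_witness[where i = ?phi and j = ?phi]) (use pp in \<open>auto\<close>)
  also have "\<dots> = (\<Sum>Us\<in>?L. \<Sum>W\<in>?C. F (Us[j := W]) (Us!j))"
    by (simp add: sum.cartesian_product case_prod_beta)
  finally show ?thesis .
qed

lemma bullet_OX:
  assumes "\<forall>s\<in>set Us. wfP s \<and> only_x s"
  shows "wfP (bulletP Us) \<and> only_x (bulletP Us)"
  using assms wfP_bulletP[of Us] by (auto simp: only_x_leavesP leavesP_bulletP)

lemma count_map_expand:
  assumes "set xs \<subseteq> C" "finite C"
  shows "(of_nat (count_list (map h xs) T) :: 'k::field) = (\<Sum>W\<in>C. of_nat (count_list xs W) * dl (h W) T)"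
proof -
  have "(of_nat (count_list (map h xs) T) :: 'k) = sum_list (map (\<lambda>x. dl x T) (map h xs))"
    by (simp only: sum_list_dl)
  also have "\<dots> = sum_list (map (\<lambda>W. dl (h W) T) xs)" by (simp add: comp_def)
  also have "\<dots> = (\<Sum>W\<in>C. of_nat (count_list xs W) * dl (h W) T)"
    by (rule sum_list_count[OF assms(2,1)])
  finally show ?thesis .
qed

lemma leibniz:
  fixes fs :: "('k::field) ser list"
  assumes ox: "\<forall>f\<in>set fs. OX f"
  shows "ddx (ser_prod fs) T = (\<Sum>j<length fs. ser_prod (fs[j := ddx (fs!j)]) T)"
proof -
  define N where "N = nlP T + 1"
  define m where "m = length fs"
  let ?C = "WFX N" and ?L = "LC N m"
  let ?c = "\<lambda>U. (of_nat (count_list (delsP U) T) :: 'k)"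
  let ?G = "\<lambda>j Us W. apl fs Us * (of_nat (count_list (delsP (Us!j)) W) * dl (bulletP (Us[j:=W])) T)"
  have fC: "finite ?C" by (rule finite_WFX)
  have fL: "finite ?L" by (rule finite_LC)
  have LCmem: "\<forall>s\<in>set Us. wfP s \<and> only_x s \<and> nlP s \<le> N" "length Us = m" if "Us \<in> ?L" for Us
    using that by (auto simp: LC_def WFX_def)
  have "ddx (ser_prod fs) T = (\<Sum>U\<in>?C. ser_prod fs U * ?c U)"
    by (rule ddx_exp[OF ser_prod_OX[OF ox] fC]) (auto simp: WFX_def N_def)
  also have "\<dots> = (\<Sum>U\<in>?C. (\<Sum>Us\<in>?L. apl fs Us * dl (bulletP Us) U) * ?c U)"
    by (rule sum.cong[OF refl]) (auto simp: sp_expand[OF ox] WFX_def m_def)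
  also have "\<dots> = (\<Sum>Us\<in>?L. apl fs Us * (\<Sum>U\<in>?C. dl (bulletP Us) U * ?c U))"
    by (simp add: sum_distrib_left sum_distrib_right mult.assoc sum.swap[of _ ?C])
  also have "\<dots> = (\<Sum>Us\<in>?L. apl fs Us * ?c (bulletP Us))"
  proof (rule sum.cong[OF refl])
    fix Us assume Us: "Us \<in> ?L"
    have "(\<Sum>U\<in>?C. dl (bulletP Us) U * ?c U) = (\<Sum>U\<in>?C. if U = bulletP Us then ?c U else 0)"
      by (rule sum.cong) (auto simp: dl_def)
    also have "\<dots> = (if bulletP Us \<in> ?C then ?c (bulletP Us) else 0)"
      by (rule sum.delta[OF fC])
    also have "\<dots> = ?c (bulletP Us)"
    proof (cases "bulletP Us \<in> ?C")
      case False
      have wo: "wfP (bulletP Us) \<and> only_x (bulletP Us)" using bullet_OX LCmem[OF Us] by blast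
      then have big: "nlP (bulletP Us) > N" using False by (auto simp: WFX_def)
      have "count_list (delsP (bulletP Us)) T = 0"
      proof (cases "bulletP Us")
        case (Some b)
        have "T \<notin> set (dels b)"
        proof
          assume "T \<in> set (dels b)"
          then have "nlP T + 1 = length (leaves b)" using dels_props wo Some by simp
          then show False using big Some by (simp add: N_def nlP_def)
        qed
        then show ?thesis using Some by (simp add: count_list_0_iff)
      qed simp
      then show ?thesis using False by simp
    qed simp
    finally show "apl fs Us * (\<Sum>U\<in>?C. dl (bulletP Us) U * ?c U) = apl fs Us * ?c (bulletP Us)" by simp
  qed
  also have "\<dots> = (\<Sum>Us\<in>?L. \<Sum>j<m. \<Sum>W\<in>?C. ?G j Us W)"
  proof (rule sum.cong[OF refl])
    fix Us assume Us: "Us \<in> ?L"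
    have w: "\<forall>s\<in>set Us. wfP s \<and> only_x s" using LCmem[OF Us] by blast
    have "?c (bulletP Us) = of_nat (count_list (concat (map (\<lambda>j. map (\<lambda>oo. bulletP (Us[j:=oo])) (delsP (Us!j))) [0..<m])) T)"
      using delsP_bullet[OF w] LCmem(2)[OF Us] by simp
    also have "\<dots> = (\<Sum>j<m. of_nat (count_list (map (\<lambda>oo. bulletP (Us[j:=oo])) (delsP (Us!j))) T))"
      by (simp add: count_list_concat comp_def sum_list_sum_nth atLeast0LessThan)
    also have "\<dots> = (\<Sum>j<m. \<Sum>W\<in>?C. of_nat (count_list (delsP (Us!j)) W) * dl (bulletP (Us[j:=W])) T)"
    proof (rule sum.cong[OF refl])
      fix j assume "j \<in> {..<m}"
      then have j: "j < length Us" using LCmem(2)[OF Us] by simp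
      have "set (delsP (Us!j)) \<subseteq> ?C"
      proof
        fix oo assume oo: "oo \<in> set (delsP (Us!j))"
        have uj: "wfP (Us!j)" "only_x (Us!j)" "nlP (Us!j) \<le> N" using LCmem(1)[OF Us] j by auto
        then obtain u where u: "Us!j = Some u" using oo by (cases "Us!j") auto
        then show "oo \<in> ?C" using dels_props[of u oo] oo uj by (auto simp: WFX_def nlP_def)
      qed
      then show "of_nat (count_list (map (\<lambda>oo. bulletP (Us[j:=oo])) (delsP (Us!j))) T) =
          (\<Sum>W\<in>?C. of_nat (count_list (delsP (Us!j)) W) * dl (bulletP (Us[j:=W])) T)"
        by (rule count_map_expand[OF _ fC])
    qed
    finally show "apl fs Us * ?c (bulletP Us) = (\<Sum>j<m. \<Sum>W\<in>?C. ?G j Us W)"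
      by (simp add: sum_distrib_left)
  qed
  also have "\<dots> = (\<Sum>j<m. \<Sum>Us\<in>?L. \<Sum>W\<in>?C. ?G j Us W)"
    by (rule sum.swap)
  also have "\<dots> = (\<Sum>j<m. ser_prod (fs[j := ddx (fs!j)]) T)"
  proof (rule sum.cong[OF refl])
    fix j assume "j \<in> {..<m}"
    then have j: "j < m" by simp
    let ?fs' = "fs[j := ddx (fs!j)]"
    have ox': "\<forall>f\<in>set ?fs'. OX f"
      using ox j OX_ddx[of "fs!j"] set_update_subset_insert[of fs j "ddx (fs!j)"] by (auto simp: m_def)
    have "ser_prod ?fs' T = (\<Sum>Ts\<in>?L. apl ?fs' Ts * dl (bulletP Ts) T)"
      using sp_expand[OF ox', of T N] by (simp add: N_def m_def)
    also have "\<dots> = (\<Sum>Ts\<in>?L. \<Sum>V\<in>?C. apl fs (Ts[j := V]) * (of_nat (count_list (delsP V) (Ts!j)) * dl (bulletP Ts) T))"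
    proof (rule sum.cong[OF refl])
      fix Ts assume Ts: "Ts \<in> ?L"
      have lT: "length Ts = m" using LCmem(2)[OF Ts] .
      show "apl ?fs' Ts * dl (bulletP Ts) T = (\<Sum>V\<in>?C. apl fs (Ts[j := V]) * (of_nat (count_list (delsP V) (Ts!j)) * dl (bulletP Ts) T))"
      proof (cases "bulletP Ts = T")
        case True
        have "nlP (Ts!j) \<le> nlP T" using nlP_le_bullet[of j Ts] True j lT by simp
        then have dd: "ddx (fs!j) (Ts!j) = (\<Sum>V\<in>?C. (fs!j) V * of_nat (count_list (delsP V) (Ts!j)))"
          using ox j by (intro ddx_exp[OF _ fC]) (auto simp: WFX_def N_def m_def)
        have "apl ?fs' Ts = ddx (fs!j) (Ts!j) * Pj fs j Ts"
          using apl_upd'[of j fs] j by (simp add: m_def)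
        moreover have "apl fs (Ts[j := V]) = (fs!j) V * Pj fs j Ts" for V
          using apl_split[of j fs "Ts[j := V]"] j lT by (simp add: Pj_upd m_def)
        ultimately show ?thesis using True dd
          by (simp add: dl_def sum_distrib_right sum_distrib_left algebra_simps)
      qed (simp add: dl_def)
    qed
    also have "\<dots> = (\<Sum>Us\<in>?L. \<Sum>W\<in>?C. apl fs ((Us[j := W])[j := Us!j]) * (of_nat (count_list (delsP (Us!j)) ((Us[j := W])!j)) * dl (bulletP (Us[j := W])) T))"
      by (rule swap_reindex[OF j])
    also have "\<dots> = (\<Sum>Us\<in>?L. \<Sum>W\<in>?C. ?G j Us W)"
    proof (intro sum.cong[OF refl])
      fix Us W assume Us: "Us \<in> ?L"
      then have "j < length Us" using LCmem(2)[OF Us] j by simp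
      then show "apl fs ((Us[j := W])[j := Us!j]) * (of_nat (count_list (delsP (Us!j)) ((Us[j := W])!j)) * dl (bulletP (Us[j := W])) T) = ?G j Us W"
        by simp
    qed
    finally show "(\<Sum>Us\<in>?L. \<Sum>W\<in>?C. ?G j Us W) = ser_prod ?fs' T" by simp
  qed
  finally show ?thesis by (simp add: m_def)
qed

lemma sum_list_concat': "sum_list (concat xss) = sum_list (map sum_list xss)"
  by (induct xss) auto

lemma sum_list_upt0: "sum_list (map f [0..<n]) = (\<Sum>k<n. f k)"
  by (induct n) auto

lemma OX_wfs: "OX F \<Longrightarrow> wfs F"
  by (auto simp: OX_def wfs_def)

lemma wfs_zero: "wfs ser_zero" by (simp add: wfs_def ser_zero_def)

lemma delta_thm:
  fixes g :: "('k::field) ser"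
  assumes g: "OX g" "ordx_ge g 1" "ddx g = ser_add oneP g"
  shows "reduced t \<Longrightarrow> LY \<notin> set (leaves t) \<Longrightarrow>
    ddx (phi_tree g ser_zero t) T = sum_list (map (\<lambda>oo. phi_P g ser_zero oo T) (dels t)) + of_nat (length (leaves t)) * phi_tree g ser_zero t T"
proof (induct t arbitrary: T)
  case (Leaf l)
  then have "l = LX" by (cases l) auto
  then show ?case using g(3) by (simp add: dels_def ser_add_def phi_P_def)
next
  case (Node ts)
  let ?G = "phi_tree g ser_zero"
  let ?fs = "map ?G ts"
  let ?n = "length ts"
  have ch: "reduced t \<and> LY \<notin> set (leaves t)" if "t \<in> set ts" for t using Node.prems that by auto
  have ox: "\<forall>f\<in>set ?fs. OX f"
  proof
    fix f assume "f \<in> set ?fs"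
    then obtain t where "f = ?G t" by auto
    then show "OX f" using OX_phiP0[OF g(1,2), of "Some t"] by (simp add: phi_P_def)
  qed
  have wg: "wfs g" "wfs ser_zero" using OX_wfs[OF g(1)] wfs_zero by auto
  have IH: "ddx (?G (ts!j)) = (\<lambda>T. sum_list (map (\<lambda>oo. phi_P g ser_zero oo T) (dels (ts!j))) + of_nat (length (leaves (ts!j))) * ?G (ts!j) T)"
    if "j < ?n" for j
    using Node.hyps[of "ts!j"] ch[of "ts!j"] that by auto
  have tmj: "ser_prod (?fs[j := ddx (?fs!j)]) T =
      sum_list (map (\<lambda>oo. phi_P g ser_zero (bulletP ((map Some ts)[j := oo])) T) (dels (ts!j)))
      + of_nat (length (leaves (ts!j))) * ser_prod ?fs T" if j: "j < ?n" for j
  proof -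
    have jl: "j < length ?fs" using j by simp
    have "ser_prod (?fs[j := ddx (?fs!j)]) T = ser_prod (?fs[j := (\<lambda>T. sum_list (map (\<lambda>oo. phi_P g ser_zero oo T) (dels (ts!j))) + of_nat (length (leaves (ts!j))) * ?G (ts!j) T)]) T"
      using IH[OF j] j by simp
    also have "\<dots> = ser_prod (?fs[j := (\<lambda>T. sum_list (map (\<lambda>oo. phi_P g ser_zero oo T) (dels (ts!j))))]) T
        + ser_prod (?fs[j := (\<lambda>T. of_nat (length (leaves (ts!j))) * ?G (ts!j) T)]) T"
      by (rule sp_add[OF jl])
    also have "ser_prod (?fs[j := (\<lambda>T. of_nat (length (leaves (ts!j))) * ?G (ts!j) T)]) T = of_nat (length (leaves (ts!j))) * ser_prod (?fs[j := ?G (ts!j)]) T"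
      by (rule sp_smult[OF jl])
    also have "?fs[j := ?G (ts!j)] = ?fs" using j by (metis list_update_id nth_map)
    also have "ser_prod (?fs[j := (\<lambda>T. sum_list (map (\<lambda>oo. phi_P g ser_zero oo T) (dels (ts!j))))]) T
        = sum_list (map (\<lambda>oo. ser_prod (?fs[j := phi_P g ser_zero oo]) T) (dels (ts!j)))"
      by (rule sp_sumlist[OF jl])
    also have "map (\<lambda>oo. ser_prod (?fs[j := phi_P g ser_zero oo]) T) (dels (ts!j))
        = map (\<lambda>oo. phi_P g ser_zero (bulletP ((map Some ts)[j := oo])) T) (dels (ts!j))"
    proof (rule map_cong[OF refl])
      fix oo
      have "?fs[j := phi_P g ser_zero oo] = map (phi_P g ser_zero) ((map Some ts)[j := oo])"
        by (simp add: map_update phi_P_def comp_def)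
      then show "ser_prod (?fs[j := phi_P g ser_zero oo]) T = phi_P g ser_zero (bulletP ((map Some ts)[j := oo])) T"
        using phiP_bullet[OF wg, of "(map Some ts)[j := oo]"] by simp
    qed
    finally show ?thesis .
  qed
  have "ddx (?G (Node ts)) T = (\<Sum>j<?n. ser_prod (?fs[j := ddx (?fs!j)]) T)"
    using leibniz[OF ox, of T] by simp
  also have "\<dots> = (\<Sum>j<?n. sum_list (map (\<lambda>oo. phi_P g ser_zero (bulletP ((map Some ts)[j := oo])) T) (dels (ts!j)))
      + of_nat (length (leaves (ts!j))) * ser_prod ?fs T)"
    by (rule sum.cong[OF refl], rule tmj, simp)
  also have "\<dots> = (\<Sum>j<?n. sum_list (map (\<lambda>oo. phi_P g ser_zero (bulletP ((map Some ts)[j := oo])) T) (dels (ts!j))))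
      + (\<Sum>j<?n. of_nat (length (leaves (ts!j)))) * ser_prod ?fs T"
    by (simp add: sum.distrib sum_distrib_right)
  also have "(\<Sum>j<?n. sum_list (map (\<lambda>oo. phi_P g ser_zero (bulletP ((map Some ts)[j := oo])) T) (dels (ts!j))))
      = sum_list (map (\<lambda>oo. phi_P g ser_zero oo T) (dels (Node ts)))"
  proof -
    have d: "dels (Node ts) = concat (map (\<lambda>k. map (\<lambda>oo. bulletP ((map Some ts)[k := oo])) (dels (ts!k))) [0..<?n])"
      by (rule dels_Node) (use ch in auto)
    show ?thesis unfolding d by (simp add: map_concat sum_list_concat' comp_def sum_list_upt0)
  qed
  also have "(\<Sum>j<?n. (of_nat (length (leaves (ts!j))) :: 'k)) = of_nat (length (leaves (Node ts)))"
    by (simp add: len_concat_nth)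
  finally show ?case by simp
qed

lemma KX_OX: "f \<in> KX \<Longrightarrow> OX f"
  by (auto simp: KX_def KXY_def OX_def)

lemma ddx_oneP: "ddx (oneP :: ('k::field) ser) T = 0"
proof -
  have ox: "OX (oneP :: 'k ser)" by (simp add: OX_def oneP_def)
  have "ddx (oneP :: 'k ser) T = (\<Sum>S\<in>WFX (nlP T + 1). oneP S * of_nat (count_list (delsP S) T))"
    by (rule ddx_exp[OF ox finite_WFX]) (auto simp: WFX_def)
  also have "\<dots> = 0" by (rule sum.neutral) (auto simp: oneP_def)
  finally show ?thesis .
qed

lemma delta_P:
  fixes g :: "('k::field) ser"
  assumes g: "OX g" "ordx_ge g 1" "ddx g = ser_add oneP g" and S: "wfP S" "only_x S"
  shows "ddx (phi_P g ser_zero S) T = sum_list (map (\<lambda>oo. phi_P g ser_zero oo T) (delsP S)) + of_nat (nlP S) * phi_P g ser_zero S T"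
proof (cases S)
  case None
  then show ?thesis by (simp add: phi_P_def ddx_oneP nlP_def)
next
  case (Some t)
  then show ?thesis using delta_thm[OF g, of t T] S by (simp add: phi_P_def nlP_def)
qed

lemma main_eq1:
  fixes g :: "('k::field) ser"
  assumes g: "OX g" "ordx_ge g 1" "ddx g = ser_add oneP g" and f: "OX f"
  shows "ddx (subst f g) T = subst (ddx f) g T + subst (hder xser f) g T"
proof -
  let ?A = "WFX (nlP T + 1)"
  have fA: "finite ?A" by (rule finite_WFX)
  let ?P = "phi_P g ser_zero"
  have fw: "\<And>S. f S \<noteq> 0 \<Longrightarrow> wfP S" using f by (auto simp: OX_def)
  have "ddx (subst f g) T = (\<Sum>V\<in>?A. subst f g V * of_nat (count_list (delsP V) T))"
    by (rule ddx_exp[OF OX_subst[OF g(1,2)] fA]) (auto simp: WFX_def)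
  also have "\<dots> = (\<Sum>V\<in>?A. (\<Sum>S\<in>?A. f S * ?P S V) * of_nat (count_list (delsP V) T))"
  proof (rule sum.cong[OF refl])
    fix V assume V: "V \<in> ?A"
    have "subst f g V = (\<Sum>S\<in>?A. f S * ?P S V)"
      by (rule subst_exp[OF g(1,2) fA _ fw]) (use V in \<open>auto simp: WFX_def\<close>)
    then show "subst f g V * of_nat (count_list (delsP V) T) = (\<Sum>S\<in>?A. f S * ?P S V) * of_nat (count_list (delsP V) T)"
      by simp
  qed
  also have "\<dots> = (\<Sum>S\<in>?A. f S * (\<Sum>V\<in>?A. ?P S V * of_nat (count_list (delsP V) T)))"
    by (simp add: sum_distrib_left sum_distrib_right mult.assoc) (rule sum.swap)
  also have "\<dots> = (\<Sum>S\<in>?A. f S * ddx (?P S) T)"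
  proof (rule sum.cong[OF refl])
    fix S
    have "ddx (?P S) T = (\<Sum>V\<in>?A. ?P S V * of_nat (count_list (delsP V) T))"
      by (rule ddx_exp[OF OX_phiP0[OF g(1,2)] fA]) (auto simp: WFX_def)
    then show "f S * (\<Sum>V\<in>?A. ?P S V * of_nat (count_list (delsP V) T)) = f S * ddx (?P S) T" by simp
  qed
  also have "\<dots> = (\<Sum>S\<in>?A. f S * sum_list (map (\<lambda>oo. ?P oo T) (delsP S)) + f S * (of_nat (nlP S) * ?P S T))"
  proof (rule sum.cong[OF refl])
    fix S assume "S \<in> ?A"
    then have "wfP S" "only_x S" by (auto simp: WFX_def)
    then show "f S * ddx (?P S) T = f S * sum_list (map (\<lambda>oo. ?P oo T) (delsP S)) + f S * (of_nat (nlP S) * ?P S T)"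
      using delta_P[OF g] by (simp add: algebra_simps)
  qed
  also have "\<dots> = (\<Sum>S\<in>?A. f S * sum_list (map (\<lambda>oo. ?P oo T) (delsP S))) + (\<Sum>S\<in>?A. f S * (of_nat (nlP S) * ?P S T))"
    by (rule sum.distrib)
  also have "(\<Sum>S\<in>?A. f S * sum_list (map (\<lambda>oo. ?P oo T) (delsP S))) = subst (ddx f) g T"
  proof -
    have "subst (ddx f) g T = (\<Sum>V\<in>?A. ddx f V * ?P V T)"
      by (rule subst_exp[OF g(1,2) fA]) (use OX_ddx[OF f] in \<open>auto simp: WFX_def OX_def\<close>)
    also have "\<dots> = (\<Sum>V\<in>?A. (\<Sum>S\<in>?A. f S * of_nat (count_list (delsP S) V)) * ?P V T)"
    proof (rule sum.cong[OF refl])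
      fix V assume V: "V \<in> ?A"
      show "ddx f V * ?P V T = (\<Sum>S\<in>?A. f S * of_nat (count_list (delsP S) V)) * ?P V T"
      proof (cases "?P V T = 0")
        case False
        then have "nlP V \<le> nlP T" using phiP0_deg[OF g(1,2)] by blast
        then have "ddx f V = (\<Sum>S\<in>?A. f S * of_nat (count_list (delsP S) V))"
          by (intro ddx_exp[OF f fA]) (auto simp: WFX_def)
        then show ?thesis by simp
      qed simp
    qed
    also have "\<dots> = (\<Sum>S\<in>?A. f S * (\<Sum>V\<in>?A. of_nat (count_list (delsP S) V) * ?P V T))"
      by (simp add: sum_distrib_left sum_distrib_right mult.assoc) (rule sum.swap)
    also have "\<dots> = (\<Sum>S\<in>?A. f S * sum_list (map (\<lambda>oo. ?P oo T) (delsP S)))"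
    proof (rule sum.cong[OF refl])
      fix S assume SA: "S \<in> ?A"
      show "f S * (\<Sum>V\<in>?A. of_nat (count_list (delsP S) V) * ?P V T) = f S * sum_list (map (\<lambda>oo. ?P oo T) (delsP S))"
      proof (cases S)
        case (Some s)
        have sw: "reduced s" "LY \<notin> set (leaves s)" "length (leaves s) \<le> nlP T + 1"
          using SA Some by (auto simp: WFX_def nlP_def)
        have "set (delsP S) \<subseteq> ?A"
        proof
          fix oo assume "oo \<in> set (delsP S)"
          then show "oo \<in> ?A" using dels_props[OF sw(1,2), of oo] sw(3) Some by (auto simp: WFX_def)
        qed
        then show ?thesis using sum_list_count[OF fA, of "delsP S" "\<lambda>oo. ?P oo T"] by simp
      qed simp
    qed
    finally show ?thesis by simp
  qed
  also have "(\<Sum>S\<in>?A. f S * (of_nat (nlP S) * ?P S T)) = subst (hder xser f) g T"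
  proof -
    have "subst (hder xser f) g T = (\<Sum>V\<in>?A. hder xser f V * ?P V T)"
      by (rule subst_exp[OF g(1,2) fA]) (use OX_hder_x[OF f] in \<open>auto simp: WFX_def OX_def\<close>)
    also have "\<dots> = (\<Sum>S\<in>?A. f S * (of_nat (nlP S) * ?P S T))"
      by (rule sum.cong[OF refl]) (simp add: hder_x[OF f] algebra_simps)
    finally show ?thesis by simp
  qed
  finally show ?thesis .
qed

lemma subst_add:
  fixes g :: "('k::field) ser"
  assumes g: "OX g" "ordx_ge g 1" and F: "OX F1" "OX F2"
  shows "subst (ser_add F1 F2) g T = subst F1 g T + subst F2 g T"
proof -
  let ?A = "WFX (nlP T + 1)"
  have fA: "finite ?A" by (rule finite_WFX)
  have "subst (ser_add F1 F2) g T = (\<Sum>S\<in>?A. ser_add F1 F2 S * phi_P g ser_zero S T)"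
    by (rule subst_exp[OF g fA]) (use OX_add[OF F] in \<open>auto simp: WFX_def OX_def\<close>)
  also have "\<dots> = (\<Sum>S\<in>?A. F1 S * phi_P g ser_zero S T) + (\<Sum>S\<in>?A. F2 S * phi_P g ser_zero S T)"
    by (simp add: ser_add_def sum.distrib algebra_simps)
  also have "(\<Sum>S\<in>?A. F1 S * phi_P g ser_zero S T) = subst F1 g T"
    by (rule subst_exp[OF g fA, symmetric]) (use F in \<open>auto simp: WFX_def OX_def\<close>)
  also have "(\<Sum>S\<in>?A. F2 S * phi_P g ser_zero S T) = subst F2 g T"
    by (rule subst_exp[OF g fA, symmetric]) (use F in \<open>auto simp: WFX_def OX_def\<close>)
  finally show ?thesis .
qed

theorem proposition7p1:
  fixes g :: "('k::field) ser"
  assumes "g \<in> KX" and "ordx_ge g 1" and "ddx g = ser_add oneP g"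
  shows "\<forall>f\<in>KX.
           ddx (subst f g) = ser_add (subst (ddx f) g) (subst (hder xser f) g) \<and>
           ddx (subst f g) = subst (hder (ser_add oneP xser) f) g"
proof
  fix f :: "'k ser" assume "f \<in> KX"
  then have f: "OX f" by (rule KX_OX)
  have g: "OX g" "ordx_ge g 1" "ddx g = ser_add oneP g" using assms KX_OX by auto
  have e1: "ddx (subst f g) = ser_add (subst (ddx f) g) (subst (hder xser f) g)"
    by (rule ext) (simp add: ser_add_def main_eq1[OF g f])
  have "hder (ser_add oneP xser) f = ser_add (ddx f) (hder xser f)"
    by (rule ext) (subst hder_sum[OF f], simp add: ser_add_def)
  then have "subst (hder (ser_add oneP xser) f) g = subst (ser_add (ddx f) (hder xser f)) g"
    by (simp only:)
  also have "\<dots> = ser_add (subst (ddx f) g) (subst (hder xser f) g)"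
    by (rule ext, subst subst_add[OF g(1,2) OX_ddx[OF f] OX_hder_x[OF f]], simp add: ser_add_def)
  finally have "subst (hder (ser_add oneP xser) f) g = ser_add (subst (ddx f) g) (subst (hder xser f) g)" .
  then show "ddx (subst f g) = ser_add (subst (ddx f) g) (subst (hder xser f) g) \<and>
           ddx (subst f g) = subst (hder (ser_add oneP xser) f) g"
    using e1 by simp
qed

end
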